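(* Let $\mathcal{S} \subseteq 2^{[n]}$ be a Sperner family of size at most four, $h:\mathcal{S}\rightarrow 2^{[n]}$ a function such that $h(S)\subseteq S$ for every $S\in \mathcal{S}$, and suppose that the resulting family $\mathcal{F}(\mathcal{S},h)$ is s-extremal. Then there is a set $F\subseteq [n]$ with $F\notin \mathcal{F}(\mathcal{S},h)$ such that $\mathcal{F}'=\mathcal{F}(\mathcal{S},h)\cup\{F\}$ is again s-extremal.
   Context: For $n\in\mathbb{N}$, $[n]=\{1,\dots,n\}$. A set system $\mathcal{F}\subseteq 2^{[n]}$ shatters $S\subseteq[n]$ if $\{F\cap S : F\in\mathcal{F}\}=2^S$; $\text{Sh}(\mathcal{F})$ denotes the family of sets shattered by $\mathcal{F}$. By the Sauer–Shelah lemma $|\text{Sh}(\mathcal{F})|\ge|\mathcal{F}|$ always; $\mathcal{F}$ is called shattering-extremal (s-extremal) if $|\text{Sh}(\mathcal{F})|=|\mathcal{F}|$. A Sperner family is a family of sets none of which contains another. For $H\subseteq S\subseteq[n]$ let $\mathcal{Q}_{S,H}=\{H\cup B : B\subseteq [n]\setminus S\}$, the collection of all subsets of $[n]$ whose intersection with $S$ is exactly $H$. For a Sperner family $\mathcal{S}\subseteq 2^{[n]}$ and a function $h:\mathcal{S}\to 2^{[n]}$ with $h(S)\subseteq S$ for all $S\in\mathcal{S}$, define $\mathcal{F}(\mathcal{S},h)=2^{[n]}\setminus\bigcup_{S\in\mathcal{S}}\mathcal{Q}_{S,h(S)}$. *)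

theory Defs
  imports Main
begin

definition shatters :: "nat set set \<Rightarrow> nat set \<Rightarrow> bool" where
  "shatters F S \<longleftrightarrow> (\<lambda>A. A \<inter> S) ` F = Pow S"

definition Sh :: "nat set set \<Rightarrow> nat set set" where
  "Sh F = {S. shatters F S}"

definition s_extremal :: "nat set set \<Rightarrow> bool" where
  "s_extremal F \<longleftrightarrow> card (Sh F) = card F"

definition sperner :: "nat set set \<Rightarrow> bool" where
  "sperner S \<longleftrightarrow> (\<forall>A\<in>S. \<forall>B\<in>S. A \<subseteq> B \<longrightarrow> A = B)"

definition Qcube :: "nat \<Rightarrow> nat set \<Rightarrow> nat set \<Rightarrow> nat set set" where
  "Qcube n S H = {H \<union> B | B. B \<subseteq> {1..n} - S}"

definition Ffam :: "nat \<Rightarrow> nat set set \<Rightarrow> (nat set \<Rightarrow> nat set) \<Rightarrow> nat set set" where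
  "Ffam n S h = Pow {1..n} - (\<Union>T\<in>S. Qcube n T (h T))"

end

theory Submission
  imports Defs
begin

lemma shatters_sub:
  assumes "shatters A T" "A \<subseteq> Pow U"
  shows "T \<subseteq> U"
proof
  fix t assume "t \<in> T"
  then have "{t} \<in> Pow T" by simp
  with assms(1) obtain Y where "Y \<in> A" "Y \<inter> T = {t}" unfolding shatters_def by (metis imageE)
  then show "t \<in> U" using assms(2) by blast
qed

lemma Sh_sub: "A \<subseteq> Pow U \<Longrightarrow> Sh A \<subseteq> Pow U"
  unfolding Sh_def using shatters_sub by blast

lemma shattersI:
  assumes "\<And>R. R \<subseteq> T \<Longrightarrow> \<exists>Y\<in>A. Y \<inter> T = R"
  shows "shatters A T"
  unfolding shatters_def using assms by auto

lemma shattersD: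
  assumes "shatters A T" "R \<subseteq> T"
  shows "\<exists>Y\<in>A. Y \<inter> T = R"
  using assms unfolding shatters_def by (metis PowI imageE)

definition A0 :: "nat set set \<Rightarrow> nat \<Rightarrow> nat set set" where
  "A0 A c = {Y \<in> A. c \<notin> Y}"
definition A1 :: "nat set set \<Rightarrow> nat \<Rightarrow> nat set set" where
  "A1 A c = (\<lambda>Y. Y - {c}) ` {Y \<in> A. c \<in> Y}"

lemma A0_sub: "A \<subseteq> Pow U \<Longrightarrow> A0 A c \<subseteq> Pow (U - {c})"
  unfolding A0_def by auto
lemma A1_sub: "A \<subseteq> Pow U \<Longrightarrow> A1 A c \<subseteq> Pow (U - {c})"
  unfolding A1_def by auto

lemma card_A01:
  assumes "finite A"
  shows "card A = card (A0 A c) + card (A1 A c)"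
proof -
  have inj: "inj_on (\<lambda>Y. Y - {c}) {Y \<in> A. c \<in> Y}"
    by (rule inj_onI) (metis insert_Diff mem_Collect_eq)
  have "card (A1 A c) = card {Y \<in> A. c \<in> Y}"
    unfolding A1_def using card_image[OF inj] .
  moreover have "A = A0 A c \<union> {Y \<in> A. c \<in> Y}" "A0 A c \<inter> {Y \<in> A. c \<in> Y} = {}"
    unfolding A0_def by auto
  ultimately show ?thesis using assms
    by (metis card_Un_disjoint finite_Un)
qed

lemma Sh_mono_A0: "T \<in> Sh (A0 A c) \<Longrightarrow> T \<in> Sh A"
  unfolding Sh_def A0_def by (auto intro!: shattersI dest: shattersD)

lemma Sh_A1:
  assumes "T \<in> Sh (A1 A c)" "c \<notin> T"
  shows "T \<in> Sh A"
proof -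
  have "shatters A T"
  proof (rule shattersI)
    fix R assume "R \<subseteq> T"
    then obtain Z where "Z \<in> A1 A c" "Z \<inter> T = R" using assms(1) shattersD unfolding Sh_def by blast
    then obtain Y where "Y \<in> A" "Z = Y - {c}" unfolding A1_def by auto
    then show "\<exists>Y\<in>A. Y \<inter> T = R" using \<open>Z \<inter> T = R\<close> assms(2) by (intro bexI[of _ Y]) auto
  qed
  then show ?thesis unfolding Sh_def by simp
qed

lemma Sh_A01:
  assumes "T \<in> Sh (A0 A c)" "T \<in> Sh (A1 A c)" "c \<notin> T"
  shows "insert c T \<in> Sh A"
proof -
  have "shatters A (insert c T)"
  proof (rule shattersI)
    fix R assume R: "R \<subseteq> insert c T"
    show "\<exists>Y\<in>A. Y \<inter> insert c T = R"
    proof (cases "c \<in> R")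
      case True
      then have "R - {c} \<subseteq> T" using R by auto
      then obtain Z where "Z \<in> A1 A c" "Z \<inter> T = R - {c}" using assms(2) shattersD unfolding Sh_def by blast
      then obtain Y where "Y \<in> A" "c \<in> Y" "Z = Y - {c}" unfolding A1_def by auto
      then show ?thesis using \<open>Z \<inter> T = R - {c}\<close> True assms(3) by (intro bexI[of _ Y]) auto
    next
      case False
      then have "R \<subseteq> T" using R by auto
      then obtain Y where "Y \<in> A0 A c" "Y \<inter> T = R" using assms(1) shattersD unfolding Sh_def by blast
      then show ?thesis using False unfolding A0_def by (intro bexI[of _ Y]) auto
    qed
  qed
  then show ?thesis unfolding Sh_def by simp
qed

lemma Sh_notin:
  assumes "A \<subseteq> Pow (U - {c})" "T \<in> Sh A" shows "c \<notin> T"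
  using Sh_sub[OF assms(1)] assms(2) by auto

lemma Sh_finite: "finite U \<Longrightarrow> A \<subseteq> Pow U \<Longrightarrow> finite (Sh A)"
  using Sh_sub by (meson finite_Pow_iff finite_subset)

lemma card_Sh_split:
  assumes U: "finite U" "A \<subseteq> Pow U"
  shows "card (Sh (A0 A c)) + card (Sh (A1 A c)) \<le> card (Sh A)"
proof -
  let ?S0 = "Sh (A0 A c)" and ?S1 = "Sh (A1 A c)"
  have s0: "?S0 \<subseteq> Pow (U - {c})" "?S1 \<subseteq> Pow (U - {c})"
    using Sh_sub[OF A0_sub[OF U(2)]] Sh_sub[OF A1_sub[OF U(2)]] by auto
  have fin: "finite ?S0" "finite ?S1"
    using s0 U(1) by (meson finite_Diff finite_Pow_iff finite_subset)+
  have sub: "(?S0 \<union> ?S1) \<union> insert c ` (?S0 \<inter> ?S1) \<subseteq> Sh A"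
    using Sh_mono_A0 Sh_A1 Sh_A01 s0 by blast
  have disj: "(?S0 \<union> ?S1) \<inter> insert c ` (?S0 \<inter> ?S1) = {}"
    using s0 by auto
  have inj: "inj_on (insert c) (?S0 \<inter> ?S1)"
  proof (rule inj_onI)
    fix x y assume "x \<in> ?S0 \<inter> ?S1" "y \<in> ?S0 \<inter> ?S1" "insert c x = insert c y"
    moreover have "c \<notin> x" "c \<notin> y" using s0 calculation(1,2) by auto
    ultimately show "x = y" by (metis insert_ident)
  qed
  have "card (?S0 \<union> ?S1) + card (?S0 \<inter> ?S1) = card ?S0 + card ?S1"
    using card_Un_Int[OF fin] by simp
  also have "card (?S0 \<inter> ?S1) = card (insert c ` (?S0 \<inter> ?S1))"
    using card_image[OF inj] by simp
  finally have "card ?S0 + card ?S1 = card ((?S0 \<union> ?S1) \<union> insert c ` (?S0 \<inter> ?S1))"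
    using card_Un_disjoint[OF _ _ disj] fin by simp
  also have "\<dots> \<le> card (Sh A)"
    using sub Sh_finite[OF U] by (simp add: card_mono)
  finally show ?thesis .
qed

lemma pajor:
  assumes "finite U" "A \<subseteq> Pow U"
  shows "card A \<le> card (Sh A)"
  using assms
proof (induction U arbitrary: A rule: finite_induct)
  case empty
  then have "A = {} \<or> A = {{}}" by auto
  then show ?case
  proof
    assume "A = {{}}"
    then have "{} \<in> Sh A" unfolding Sh_def shatters_def by auto
    moreover have "finite (Sh A)" using Sh_finite[of "{}" A] \<open>A = {{}}\<close> by simp
    ultimately have "card (Sh A) > 0" using card_gt_0_iff by blast
    then show ?thesis using \<open>A = {{}}\<close> by simp
  qed simp
next
  case (insert c U)
  have a0: "A0 A c \<subseteq> Pow U" and a1: "A1 A c \<subseteq> Pow U"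
    using A0_sub[OF insert.prems, of c] A1_sub[OF insert.prems, of c] insert.hyps(2) by auto
  have "finite A" using insert by (meson finite.insertI finite_Pow_iff finite_subset)
  then have "card A = card (A0 A c) + card (A1 A c)" by (rule card_A01)
  also have "\<dots> \<le> card (Sh (A0 A c)) + card (Sh (A1 A c))"
    using insert.IH a0 a1 by (simp add: add_mono)
  also have "\<dots> \<le> card (Sh A)" using card_Sh_split[of "insert c U" A c] insert.hyps insert.prems by simp
  finally show ?case .
qed

lemma ext_faces:
  assumes "finite U" "A \<subseteq> Pow U" "card (Sh A) = card A"
  shows "card (Sh (A0 A c)) = card (A0 A c)" "card (Sh (A1 A c)) = card (A1 A c)"
proof -
  have a0: "A0 A c \<subseteq> Pow U" and a1: "A1 A c \<subseteq> Pow U"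
    using A0_sub[OF assms(2), of c] A1_sub[OF assms(2), of c] by auto
  have "finite A" using assms by (meson finite_Pow_iff finite_subset)
  have 1: "card (A0 A c) \<le> card (Sh (A0 A c))" "card (A1 A c) \<le> card (Sh (A1 A c))"
    using pajor assms(1) a0 a1 by blast+
  have "card (Sh (A0 A c)) + card (Sh (A1 A c)) \<le> card (A0 A c) + card (A1 A c)"
    using card_Sh_split[OF assms(1,2), of c] assms(3) card_A01[OF \<open>finite A\<close>, of c] by simp
  then show "card (Sh (A0 A c)) = card (A0 A c)" "card (Sh (A1 A c)) = card (A1 A c)"
    using 1 by linarith+
qed

definition Ared :: "nat set set \<Rightarrow> nat \<Rightarrow> nat set set" where
  "Ared A c = {Y \<in> A. c \<notin> Y \<and> insert c Y \<in> A}"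

lemma Ared_sub: "A \<subseteq> Pow U \<Longrightarrow> Ared A c \<subseteq> Pow (U - {c})"
  unfolding Ared_def by auto

lemma Ared_eq: "Ared A c = A0 A c \<inter> A1 A c"
proof (intro set_eqI iffI)
  fix Y assume "Y \<in> Ared A c"
  then have "Y \<in> A" "c \<notin> Y" "insert c Y \<in> A" unfolding Ared_def by auto
  moreover have "Y = insert c Y - {c}" using \<open>c \<notin> Y\<close> by simp
  ultimately show "Y \<in> A0 A c \<inter> A1 A c" unfolding A0_def A1_def by blast
next
  fix Y assume "Y \<in> A0 A c \<inter> A1 A c"
  then obtain Z where "Y \<in> A" "c \<notin> Y" "Z \<in> A" "c \<in> Z" "Y = Z - {c}" unfolding A0_def A1_def by auto
  moreover have "insert c Y = Z" using calculation by auto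
  ultimately show "Y \<in> Ared A c" unfolding Ared_def by auto
qed

lemma ext_red:
  assumes U: "finite U" "A \<subseteq> Pow U" and e: "card (Sh A) = card A"
  shows "card (Sh (Ared A c)) = card (Ared A c)"
proof -
  let ?P = "A0 A c \<union> A1 A c" and ?R = "Ared A c"
  have p: "?P \<subseteq> Pow (U - {c})" using A0_sub[OF U(2)] A1_sub[OF U(2)] by blast
  have r: "?R \<subseteq> Pow (U - {c})" using Ared_sub[OF U(2)] .
  have finU: "finite (U - {c})" using U by simp
  have finA: "finite A" using U by (meson finite_Pow_iff finite_subset)
  have fin01: "finite (A0 A c)" "finite (A1 A c)" unfolding A0_def A1_def using finA by auto
  have sP: "Sh ?P \<subseteq> Pow (U - {c})" "Sh ?R \<subseteq> Pow (U - {c})" using Sh_sub p r by blast+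
  have finS: "finite (Sh ?P)" "finite (Sh ?R)" using Sh_finite[OF finU] p r by blast+
  have sub1: "Sh ?P \<subseteq> Sh A"
  proof
    fix T assume T: "T \<in> Sh ?P"
    have "shatters A T"
    proof (rule shattersI)
      fix R assume "R \<subseteq> T"
      then obtain Z where Z: "Z \<in> ?P" "Z \<inter> T = R" using T shattersD unfolding Sh_def by blast
      have cT: "c \<notin> T" using T sP by auto
      from Z(1) show "\<exists>Y\<in>A. Y \<inter> T = R"
      proof
        assume "Z \<in> A0 A c" then show ?thesis using Z(2) unfolding A0_def by auto
      next
        assume "Z \<in> A1 A c"
        then obtain Y where "Y \<in> A" "Z = Y - {c}" unfolding A1_def by auto
        then show ?thesis using Z(2) cT by (intro bexI[of _ Y]) auto
      qed
    qed
    then show "T \<in> Sh A" unfolding Sh_def by simp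
  qed
  have sub2: "insert c ` Sh ?R \<subseteq> Sh A"
  proof
    fix T' assume "T' \<in> insert c ` Sh ?R"
    then obtain T where T: "T \<in> Sh ?R" "T' = insert c T" by auto
    have cT: "c \<notin> T" using T sP by auto
    have "shatters A (insert c T)"
    proof (rule shattersI)
      fix R assume R: "R \<subseteq> insert c T"
      then have "R - {c} \<subseteq> T" by auto
      then obtain Z where Z: "Z \<in> ?R" "Z \<inter> T = R - {c}" using T(1) shattersD unfolding Sh_def by blast
      then have Z2: "Z \<in> A" "insert c Z \<in> A" "c \<notin> Z" unfolding Ared_def by auto
      show "\<exists>Y\<in>A. Y \<inter> insert c T = R"
      proof (cases "c \<in> R")
        case True
        then show ?thesis using Z Z2 cT by (intro bexI[of _ "insert c Z"]) auto
      next
        case False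
        then show ?thesis using Z Z2 cT by (intro bexI[of _ Z]) auto
      qed
    qed
    then show "T' \<in> Sh A" using T unfolding Sh_def by simp
  qed
  have disj: "Sh ?P \<inter> insert c ` Sh ?R = {}" using sP by auto
  have inj: "inj_on (insert c) (Sh ?R)"
  proof (rule inj_onI)
    fix x y assume "x \<in> Sh ?R" "y \<in> Sh ?R" "insert c x = insert c y"
    moreover have "c \<notin> x" "c \<notin> y" using sP calculation(1,2) by auto
    ultimately show "x = y" by (metis insert_ident)
  qed
  have "card (Sh ?P) + card (Sh ?R) = card (Sh ?P \<union> insert c ` Sh ?R)"
    using card_Un_disjoint[OF finS(1) _ disj] finS(2) card_image[OF inj] by simp
  also have "\<dots> \<le> card (Sh A)" using sub1 sub2 Sh_finite[OF U] by (simp add: card_mono)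
  finally have le: "card (Sh ?P) + card (Sh ?R) \<le> card A" using e by simp
  have "card ?P + card ?R = card (A0 A c) + card (A1 A c)"
    unfolding Ared_eq using card_Un_Int[OF fin01] by simp
  also have "\<dots> = card A" using card_A01[OF finA] by simp
  finally have eq: "card ?P + card ?R = card A" .
  have "card ?P \<le> card (Sh ?P)" "card ?R \<le> card (Sh ?R)" using pajor[OF finU] p r by blast+
  then show ?thesis using le eq by linarith
qed

definition rest :: "nat set set \<Rightarrow> nat set \<Rightarrow> nat set \<Rightarrow> nat set set" where
  "rest A W R = {Y - W | Y. Y \<in> A \<and> Y \<inter> W = R}"

lemma rest_sub: "A \<subseteq> Pow U \<Longrightarrow> rest A W R \<subseteq> Pow (U - W)"
  unfolding rest_def by auto

lemma rest_empty: "rest A {} {} = A"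
  unfolding rest_def by auto

lemma rest_insert:
  assumes "c \<notin> W" "R \<subseteq> insert c W"
  shows "rest A (insert c W) R =
    (if c \<in> R then A1 (rest A W (R - {c})) c else A0 (rest A W (R - {c})) c)"
proof (cases "c \<in> R")
  case True
  have "rest A (insert c W) R = A1 (rest A W (R - {c})) c"
  proof (intro set_eqI iffI)
    fix Z assume "Z \<in> rest A (insert c W) R"
    then obtain Y where Y: "Y \<in> A" "Y \<inter> insert c W = R" "Z = Y - insert c W" unfolding rest_def by blast
    then have "Y - W \<in> rest A W (R - {c})" "c \<in> Y - W" using True assms(1) unfolding rest_def by auto
    moreover have "Z = (Y - W) - {c}" using Y by auto
    ultimately show "Z \<in> A1 (rest A W (R - {c})) c" unfolding A1_def by blast
  next
    fix Z assume "Z \<in> A1 (rest A W (R - {c})) c"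
    then obtain Y' where Y': "Y' \<in> rest A W (R - {c})" "c \<in> Y'" "Z = Y' - {c}" unfolding A1_def by auto
    then obtain Y where Y: "Y \<in> A" "Y \<inter> W = R - {c}" "Y' = Y - W" unfolding rest_def by blast
    then have "Y \<inter> insert c W = R" using Y' True assms by auto
    then show "Z \<in> rest A (insert c W) R" using Y Y' unfolding rest_def by blast
  qed
  then show ?thesis using True by simp
next
  case False
  have "rest A (insert c W) R = A0 (rest A W (R - {c})) c"
  proof (intro set_eqI iffI)
    fix Z assume "Z \<in> rest A (insert c W) R"
    then obtain Y where Y: "Y \<in> A" "Y \<inter> insert c W = R" "Z = Y - insert c W" unfolding rest_def by blast
    then have "Y - W \<in> rest A W (R - {c})" "c \<notin> Y - W" using False assms(1) unfolding rest_def by auto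
    moreover have "Z = Y - W" using Y False by auto
    ultimately show "Z \<in> A0 (rest A W (R - {c})) c" unfolding A0_def by blast
  next
    fix Z assume "Z \<in> A0 (rest A W (R - {c})) c"
    then have Z: "Z \<in> rest A W (R - {c})" "c \<notin> Z" unfolding A0_def by auto
    then obtain Y where Y: "Y \<in> A" "Y \<inter> W = R - {c}" "Z = Y - W" unfolding rest_def by blast
    then have "Y \<inter> insert c W = R" using Z False assms by auto
    moreover have "Z = Y - insert c W" using Y Z by auto
    ultimately show "Z \<in> rest A (insert c W) R" using Y unfolding rest_def by blast
  qed
  then show ?thesis using False by simp
qed

lemma ext_rest:
  assumes "finite W" "finite U" "A \<subseteq> Pow U" "card (Sh A) = card A" "W \<subseteq> U" "R \<subseteq> W"
  shows "card (Sh (rest A W R)) = card (rest A W R)"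
  using assms
proof (induction W arbitrary: R rule: finite_induct)
  case empty
  then show ?case by (simp add: rest_empty)
next
  case (insert c W)
  have "R - {c} \<subseteq> W" using insert.prems by auto
  then have IH: "card (Sh (rest A W (R - {c}))) = card (rest A W (R - {c}))"
    using insert.IH insert.prems by auto
  have sub: "rest A W (R - {c}) \<subseteq> Pow (U - W)" using rest_sub[OF insert.prems(2)] .
  have fin: "finite (U - W)" using insert by simp
  note ef = ext_faces[OF fin sub IH, of c]
  show ?case
  proof (cases "c \<in> R")
    case True
    then show ?thesis unfolding rest_insert[OF insert.hyps(2) insert.prems(5)] using ef(2) by simp
  next
    case False
    have "rest A (insert c W) R = A0 (rest A W (R - {c})) c"
      using rest_insert[OF insert.hyps(2) insert.prems(5)] False by simp
    then show ?thesis using ef(1) by simp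
  qed
qed

lemma W1:
  assumes U: "finite U" "A \<subseteq> Pow U" and PQ: "P \<in> A" "Q \<in> A"
    and E: "E = (P - Q) \<union> (Q - P)" "2 \<le> card E"
    and only: "\<And>Z. Z \<in> A \<Longrightarrow> Z - E = P - E \<Longrightarrow> Z = P \<or> Z = Q"
  shows "card (Sh A) \<noteq> card A"
proof
  assume e: "card (Sh A) = card A"
  let ?W = "U - E" and ?R = "P - E"
  have PU: "P \<subseteq> U" "Q \<subseteq> U" using PQ U by auto
  have R: "?R \<subseteq> ?W" using PU by auto
  have e2: "card (Sh (rest A ?W ?R)) = card (rest A ?W ?R)"
    using ext_rest[OF _ U e _ R] U(1) by auto
  have QE: "Q - E = P - E" using E(1) by auto
  have rr: "rest A ?W ?R = {P \<inter> E, Q \<inter> E}"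
  proof (intro set_eqI iffI)
    fix Z assume "Z \<in> rest A ?W ?R"
    then obtain Y where Y: "Y \<in> A" "Y \<inter> ?W = ?R" "Z = Y - ?W" unfolding rest_def by blast
    have "Y \<subseteq> U" using Y U by auto
    then have "Y - E = P - E" using Y(2) PU by auto
    then have "Y = P \<or> Y = Q" using only Y(1) by blast
    then show "Z \<in> {P \<inter> E, Q \<inter> E}" using Y(3) PU by auto
  next
    fix Z assume "Z \<in> {P \<inter> E, Q \<inter> E}"
    then show "Z \<in> rest A ?W ?R"
    proof
      assume "Z = P \<inter> E" then show ?thesis unfolding rest_def using PQ PU by (intro CollectI exI[of _ P]) auto
    next
      assume "Z \<in> {Q \<inter> E}" then show ?thesis unfolding rest_def using PQ PU QE by (intro CollectI exI[of _ Q]) auto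
    qed
  qed
  have EU: "E \<subseteq> U" using E(1) PU by auto
  have finE: "finite E" using EU U(1) finite_subset by blast
  have neq: "P \<inter> E \<noteq> Q \<inter> E"
  proof
    assume "P \<inter> E = Q \<inter> E"
    then have "E = {}" using E(1) by auto
    then show False using E(2) by simp
  qed
  have c2: "card {P \<inter> E, Q \<inter> E} = 2" using neq by simp
  have sing: "insert {} ((\<lambda>e. {e}) ` E) \<subseteq> Sh {P \<inter> E, Q \<inter> E}"
  proof
    fix T assume "T \<in> insert {} ((\<lambda>e. {e}) ` E)"
    then show "T \<in> Sh {P \<inter> E, Q \<inter> E}"
    proof
      assume "T = {}" then show ?thesis unfolding Sh_def shatters_def by auto
    next
      assume "T \<in> (\<lambda>e. {e}) ` E"
      then obtain e where e: "e \<in> E" "T = {e}" by auto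
      have "shatters {P \<inter> E, Q \<inter> E} {e}"
      proof (rule shattersI)
        fix R assume "R \<subseteq> {e}"
        then have "R = {} \<or> R = {e}" by auto
        moreover have "(e \<in> P \<and> e \<notin> Q) \<or> (e \<in> Q \<and> e \<notin> P)" using e E(1) by auto
        ultimately show "\<exists>Y\<in>{P \<inter> E, Q \<inter> E}. Y \<inter> {e} = R" using e by auto
      qed
      then show ?thesis using e unfolding Sh_def by simp
    qed
  qed
  have "card (insert {} ((\<lambda>e. {e}) ` E)) = Suc (card E)"
  proof -
    have "inj_on (\<lambda>e. {e}) E" by (auto intro: inj_onI)
    then have "card ((\<lambda>e. {e}) ` E) = card E" by (simp add: card_image)
    moreover have "{} \<notin> (\<lambda>e. {e}) ` E" by auto
    ultimately show ?thesis using finE by simp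
  qed
  moreover have "finite (Sh {P \<inter> E, Q \<inter> E})"
    using Sh_finite[OF finE, of "{P \<inter> E, Q \<inter> E}"] by auto
  ultimately have "Suc (card E) \<le> card (Sh {P \<inter> E, Q \<inter> E})" using sing card_mono by metis
  then show False using e2 rr c2 E(2) by simp
qed

lemma add_point:
  assumes U: "finite U" "F \<subseteq> Pow U" and e: "card (Sh F) = card F"
    and X: "X \<subseteq> U" "X \<notin> F"
    and iso: "\<And>T. T \<in> Sh (insert X F) \<Longrightarrow> T \<notin> Sh F \<Longrightarrow> T = S0"
  shows "card (Sh (insert X F)) = card (insert X F)"
proof -
  have finF: "finite F" using U by (meson finite_Pow_iff finite_subset)
  have sub: "insert X F \<subseteq> Pow U" using X U by auto
  have "Sh (insert X F) \<subseteq> insert S0 (Sh F)" using iso by blast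
  then have "card (Sh (insert X F)) \<le> card (insert S0 (Sh F))"
    using Sh_finite[OF U] by (simp add: card_mono)
  also have "\<dots> \<le> Suc (card (Sh F))" by (simp add: card_insert_le_m1)
  finally have "card (Sh (insert X F)) \<le> card (insert X F)" using e X(2) finF by simp
  moreover have "card (insert X F) \<le> card (Sh (insert X F))" using pajor[OF U(1) sub] .
  ultimately show ?thesis by simp
qed


definition flip :: "nat set \<Rightarrow> nat \<Rightarrow> nat set" where
  "flip X a = (if a \<in> X then X - {a} else insert a X)"

definition cube :: "nat set \<Rightarrow> nat set \<Rightarrow> nat set \<Rightarrow> nat set set" where
  "cube U S H = {X. X \<subseteq> U \<and> X \<inter> S = H}"

definition GG :: "nat set \<Rightarrow> (nat set \<times> nat set) set \<Rightarrow> nat set set" where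
  "GG U C = (\<Union>p\<in>C. cube U (fst p) (snd p))"

definition FF :: "nat set \<Rightarrow> (nat set \<times> nat set) set \<Rightarrow> nat set set" where
  "FF U C = Pow U - GG U C"

definition wfc :: "nat set \<Rightarrow> (nat set \<times> nat set) set \<Rightarrow> bool" where
  "wfc U C \<longleftrightarrow> finite U \<and> (\<forall>p\<in>C. snd p \<subseteq> fst p \<and> fst p \<subseteq> U) \<and>
     (\<forall>p\<in>C. \<forall>q\<in>C. fst p \<subseteq> fst q \<longrightarrow> p = q)"

definition ACov :: "nat set \<Rightarrow> (nat set \<times> nat set) set \<Rightarrow> bool" where
  "ACov U C \<longleftrightarrow> (\<forall>p\<in>C. \<forall>X\<in>cube U (fst p) (snd p). \<exists>a\<in>fst p. flip X a \<in> GG U C)"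

lemma flip_mem: "b \<in> flip X a \<longleftrightarrow> (if b = a then a \<notin> X else b \<in> X)"
  unfolding flip_def by auto

lemma flip_sub: "X \<subseteq> U \<Longrightarrow> a \<in> U \<Longrightarrow> flip X a \<subseteq> U"
  unfolding flip_def by auto

definition critical :: "(nat set \<times> nat set) set \<Rightarrow> nat \<Rightarrow> bool" where
  "critical C c \<longleftrightarrow> (\<exists>p\<in>C. \<exists>q\<in>C. fst p - fst q = {c})"

definition conflict :: "(nat set \<times> nat set) set \<Rightarrow> nat \<Rightarrow> bool" where
  "conflict C c \<longleftrightarrow> (\<exists>p\<in>C. \<exists>q\<in>C. c \<in> fst p \<and> c \<in> fst q \<and> c \<in> snd p \<and> c \<notin> snd q)"

lemma cube_mem: "X \<in> cube U S H \<longleftrightarrow> X \<subseteq> U \<and> X \<inter> S = H"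
  unfolding cube_def by simp

lemma proj_red:
  assumes wf: "wfc U C" and cU: "c \<in> U" and nc: "\<not> critical C c" and ac: "ACov U C"
  defines "C' \<equiv> (\<lambda>p. (fst p - {c}, snd p - {c})) ` C"
  shows "wfc (U - {c}) C'" "card C' \<le> card C" "ACov (U - {c}) C'"
    "FF (U - {c}) C' = Ared (FF U C) c"
proof -
  have finU: "finite U" and pw: "\<And>p. p \<in> C \<Longrightarrow> snd p \<subseteq> fst p \<and> fst p \<subseteq> U"
    and ach: "\<And>p q. p \<in> C \<Longrightarrow> q \<in> C \<Longrightarrow> fst p \<subseteq> fst q \<Longrightarrow> p = q"
    using wf unfolding wfc_def by auto
  have finC: "finite C"
  proof -
    have "C \<subseteq> Pow U \<times> Pow U"
    proof
      fix p assume "p \<in> C" then show "p \<in> Pow U \<times> Pow U" using pw[of p] by (cases p) auto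
    qed
    then show ?thesis using finU by (meson finite_Pow_iff finite_SigmaI finite_subset)
  qed
  have diff: "\<And>p q. p \<in> C \<Longrightarrow> q \<in> C \<Longrightarrow> fst p - fst q \<noteq> {c}" using nc unfolding critical_def by blast
  have w1: "\<forall>p'\<in>C'. snd p' \<subseteq> fst p' \<and> fst p' \<subseteq> U - {c}"
  proof
    fix p' assume "p' \<in> C'"
    then obtain p where p: "p \<in> C" "p' = (fst p - {c}, snd p - {c})" unfolding C'_def by auto
    then show "snd p' \<subseteq> fst p' \<and> fst p' \<subseteq> U - {c}" using pw[OF p(1)] by auto
  qed
  have w2: "\<forall>p'\<in>C'. \<forall>q'\<in>C'. fst p' \<subseteq> fst q' \<longrightarrow> p' = q'"
  proof (intro ballI impI)
    fix p' q' assume "p' \<in> C'" "q' \<in> C'" and sub: "fst p' \<subseteq> fst q'"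
    then obtain p q where pq: "p \<in> C" "q \<in> C" "p' = (fst p - {c}, snd p - {c})" "q' = (fst q - {c}, snd q - {c})"
      unfolding C'_def by auto
    then have "fst p - fst q \<subseteq> {c}" using sub by auto
    then have "fst p - fst q = {}" using diff[OF pq(1,2)] by blast
    then have "p = q" using ach pq by blast
    then show "p' = q'" using pq by simp
  qed
  show "wfc (U - {c}) C'" unfolding wfc_def using w1 w2 finU by simp
  show "card C' \<le> card C" unfolding C'_def using card_image_le[OF finC] .
  have Geq: "\<And>Y. Y \<subseteq> U - {c} \<Longrightarrow> Y \<in> GG (U - {c}) C' \<longleftrightarrow> (Y \<in> GG U C \<or> insert c Y \<in> GG U C)"
  proof -
    fix Y assume Y: "Y \<subseteq> U - {c}"
    show "Y \<in> GG (U - {c}) C' \<longleftrightarrow> (Y \<in> GG U C \<or> insert c Y \<in> GG U C)"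
    proof
      assume "Y \<in> GG (U - {c}) C'"
      then obtain p where p: "p \<in> C" "Y \<inter> (fst p - {c}) = snd p - {c}"
        unfolding GG_def C'_def cube_def by auto
      show "Y \<in> GG U C \<or> insert c Y \<in> GG U C"
      proof (cases "c \<in> snd p")
        case True
        then have "insert c Y \<inter> fst p = snd p" using p pw[OF p(1)] Y by auto
        then have "insert c Y \<in> cube U (fst p) (snd p)" using Y cU unfolding cube_def by auto
        then show ?thesis using p(1) unfolding GG_def by blast
      next
        case False
        then have "Y \<inter> fst p = snd p" using p pw[OF p(1)] Y by auto
        then have "Y \<in> cube U (fst p) (snd p)" using Y unfolding cube_def by auto
        then show ?thesis using p(1) unfolding GG_def by blast
      qed
    next
      assume "Y \<in> GG U C \<or> insert c Y \<in> GG U C"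
      then obtain p Z where p: "p \<in> C" "Z \<inter> fst p = snd p" "Z = Y \<or> Z = insert c Y"
        unfolding GG_def cube_def by blast
      then have "Y \<inter> (fst p - {c}) = snd p - {c}" by auto
      then have "Y \<in> cube (U - {c}) (fst p - {c}) (snd p - {c})" using Y unfolding cube_def by auto
      then show "Y \<in> GG (U - {c}) C'" using p(1) unfolding GG_def C'_def by force
    qed
  qed
  show "FF (U - {c}) C' = Ared (FF U C) c"
  proof (intro set_eqI iffI)
    fix Y assume "Y \<in> FF (U - {c}) C'"
    then have Y: "Y \<subseteq> U - {c}" "Y \<notin> GG (U - {c}) C'" unfolding FF_def by auto
    then show "Y \<in> Ared (FF U C) c" using Geq[OF Y(1)] cU unfolding Ared_def FF_def by auto
  next
    fix Y assume "Y \<in> Ared (FF U C) c"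
    then have Y: "Y \<subseteq> U - {c}" "Y \<notin> GG U C" "insert c Y \<notin> GG U C" unfolding Ared_def FF_def by auto
    then show "Y \<in> FF (U - {c}) C'" using Geq[OF Y(1)] unfolding FF_def by auto
  qed
  show "ACov (U - {c}) C'"
    unfolding ACov_def
  proof (intro ballI)
    fix p' X' assume p': "p' \<in> C'" and X': "X' \<in> cube (U - {c}) (fst p') (snd p')"
    then obtain p where p: "p \<in> C" "p' = (fst p - {c}, snd p - {c})" unfolding C'_def by auto
    have X'U: "X' \<subseteq> U - {c}" and X'S: "X' \<inter> (fst p - {c}) = snd p - {c}" using X' p unfolding cube_def by auto
    define X where "X = (if c \<in> snd p then insert c X' else X')"
    have XU: "X \<subseteq> U" using X'U cU unfolding X_def by auto
    have XS: "X \<inter> fst p = snd p" using X'S pw[OF p(1)] X'U unfolding X_def by auto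
    have X'eq: "X - {c} = X'" using X'U unfolding X_def by auto
    obtain a where a: "a \<in> fst p" "flip X a \<in> GG U C"
      using ac p(1) XU XS unfolding ACov_def cube_def by blast
    obtain q where q: "q \<in> C" "flip X a \<in> cube U (fst q) (snd q)" using a(2) unfolding GG_def by auto
    show "\<exists>a\<in>fst p'. flip X' a \<in> GG (U - {c}) C'"
    proof (cases "a = c")
      case False
      have "flip X' a = flip X a - {c}" using False X'eq unfolding flip_def by auto
      moreover have "flip X a - {c} \<in> GG (U - {c}) C'"
      proof -
        have fU: "flip X a \<subseteq> U" using flip_sub[OF XU, of a] a pw[OF p(1)] by auto
        then have Ysub: "flip X a - {c} \<subseteq> U - {c}" by auto
        have "flip X a = flip X a - {c} \<or> flip X a = insert c (flip X a - {c})" by auto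
        then have "flip X a - {c} \<in> GG U C \<or> insert c (flip X a - {c}) \<in> GG U C" using a(2) by metis
        then show ?thesis using Geq[OF Ysub] by blast
      qed
      ultimately have "flip X' a \<in> GG (U - {c}) C'" by simp
      moreover have "a \<in> fst p'" using a(1) False p(2) by simp
      ultimately show ?thesis by blast
    next
      case True
      have qp: "q \<noteq> p"
      proof
        assume "q = p"
        then have "flip X c \<inter> fst p = snd p" using q True unfolding cube_def by auto
        moreover have "c \<in> fst p" using a True by simp
        ultimately show False using XS unfolding flip_def by (auto split: if_splits)
      qed
      have "fst p - fst q \<noteq> {}" using ach[OF p(1) q(1)] qp by blast
      moreover have "fst p - fst q \<noteq> {c}" using diff[OF p(1) q(1)] .
      ultimately obtain b where b: "b \<in> fst p" "b \<notin> fst q" "b \<noteq> c" by blast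
      have fe: "flip X c - {c} = X'" using X'eq unfolding flip_def by auto
      have "flip X c \<inter> fst q = snd q" using q True unfolding cube_def by auto
      then have "(flip X c - {c}) \<inter> (fst q - {c}) = snd q - {c}" by blast
      then have "X' \<inter> (fst q - {c}) = snd q - {c}" using fe by simp
      then have "flip X' b \<inter> (fst q - {c}) = snd q - {c}" using b unfolding flip_def by auto
      moreover have "flip X' b \<subseteq> U - {c}" using flip_sub[OF X'U, of b] b pw[OF p(1)] by auto
      ultimately have "flip X' b \<in> cube (U - {c}) (fst q - {c}) (snd q - {c})" unfolding cube_def by auto
      then have "flip X' b \<in> GG (U - {c}) C'" using q(1) unfolding GG_def C'_def by force
      then show ?thesis using b p(2) by auto
    qed
  qed
qed

lemma face_red:
  assumes wf: "wfc U C" and cU: "c \<in> U" and nf: "\<not> conflict C c" and ex: "\<exists>q\<in>C. c \<notin> fst q"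
    and ac: "ACov U C"
  defines "C' \<equiv> {p \<in> C. c \<notin> fst p}" and "v \<equiv> (\<exists>p\<in>C. c \<in> fst p \<and> c \<notin> snd p)"
  shows "wfc (U - {c}) C'" "C' \<noteq> {}" "card C' \<le> card C" "ACov (U - {c}) C'"
    "FF (U - {c}) C' = (if v then A1 (FF U C) c else A0 (FF U C) c)"
proof -
  have finU: "finite U" and pw: "\<And>p. p \<in> C \<Longrightarrow> snd p \<subseteq> fst p \<and> fst p \<subseteq> U"
    and ach: "\<And>p q. p \<in> C \<Longrightarrow> q \<in> C \<Longrightarrow> fst p \<subseteq> fst q \<Longrightarrow> p = q"
    using wf unfolding wfc_def by auto
  have finC: "finite C"
  proof -
    have "C \<subseteq> Pow U \<times> Pow U"
    proof
      fix p assume "p \<in> C" then show "p \<in> Pow U \<times> Pow U" using pw[of p] by (cases p) auto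
    qed
    then show ?thesis using finU by (meson finite_Pow_iff finite_SigmaI finite_subset)
  qed
  have key: "\<And>p. p \<in> C \<Longrightarrow> c \<in> fst p \<Longrightarrow> (c \<in> snd p \<longleftrightarrow> \<not> v)"
    using nf unfolding conflict_def v_def by blast
  define lift where "lift Y = (if v then insert c Y else Y)" for Y
  have lift_mem: "\<And>Y b. b \<noteq> c \<Longrightarrow> b \<in> lift Y \<longleftrightarrow> b \<in> Y" unfolding lift_def by auto
  have lift_c: "\<And>Y. c \<in> lift Y \<longleftrightarrow> v \<or> c \<in> Y" unfolding lift_def by auto
  have Geq: "\<And>Y. Y \<subseteq> U - {c} \<Longrightarrow> Y \<in> GG (U - {c}) C' \<longleftrightarrow> lift Y \<in> GG U C"
  proof -
    fix Y assume Y: "Y \<subseteq> U - {c}"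
    have liftU: "lift Y \<subseteq> U" using Y cU unfolding lift_def by auto
    show "Y \<in> GG (U - {c}) C' \<longleftrightarrow> lift Y \<in> GG U C"
    proof
      assume "Y \<in> GG (U - {c}) C'"
      then obtain p where p: "p \<in> C" "c \<notin> fst p" "Y \<inter> fst p = snd p"
        unfolding GG_def C'_def cube_def by auto
      have "lift Y \<inter> fst p = Y \<inter> fst p" using p(2) unfolding lift_def by auto
      then have "lift Y \<inter> fst p = snd p" using p(3) by simp
      then show "lift Y \<in> GG U C" using p(1) liftU unfolding GG_def cube_def by blast
    next
      assume "lift Y \<in> GG U C"
      then obtain p where p: "p \<in> C" "lift Y \<inter> fst p = snd p" unfolding GG_def cube_def by auto
      have "c \<notin> fst p"
      proof
        assume cp: "c \<in> fst p"
        then have "c \<in> snd p \<longleftrightarrow> v" using p(2) lift_c Y by auto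
        then show False using key[OF p(1) cp] by simp
      qed
      moreover have "lift Y \<inter> fst p = Y \<inter> fst p" using calculation unfolding lift_def by auto
      ultimately have "Y \<inter> fst p = snd p" using p(2) by simp
      then have "Y \<in> cube (U - {c}) (fst p) (snd p)" using Y unfolding cube_def by auto
      moreover have "p \<in> C'" using p(1) \<open>c \<notin> fst p\<close> unfolding C'_def by auto
      ultimately show "Y \<in> GG (U - {c}) C'" unfolding GG_def by blast
    qed
  qed
  have w1: "\<forall>p\<in>C'. snd p \<subseteq> fst p \<and> fst p \<subseteq> U - {c}"
  proof
    fix p assume "p \<in> C'"
    then have "p \<in> C" "c \<notin> fst p" unfolding C'_def by auto
    then show "snd p \<subseteq> fst p \<and> fst p \<subseteq> U - {c}" using pw[OF \<open>p \<in> C\<close>] by auto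
  qed
  have w2: "\<forall>p\<in>C'. \<forall>q\<in>C'. fst p \<subseteq> fst q \<longrightarrow> p = q"
  proof (intro ballI impI)
    fix p q assume "p \<in> C'" "q \<in> C'" "fst p \<subseteq> fst q"
    then show "p = q" using ach unfolding C'_def by blast
  qed
  show "wfc (U - {c}) C'" unfolding wfc_def using w1 w2 finU by simp
  show "C' \<noteq> {}" using ex unfolding C'_def by auto
  show "card C' \<le> card C" unfolding C'_def using finC by (simp add: card_mono)
  show "FF (U - {c}) C' = (if v then A1 (FF U C) c else A0 (FF U C) c)"
  proof (cases v)
    case True
    have "FF (U - {c}) C' = A1 (FF U C) c"
    proof (intro set_eqI iffI)
      fix Y assume "Y \<in> FF (U - {c}) C'"
      then have Y: "Y \<subseteq> U - {c}" "lift Y \<notin> GG U C" using Geq unfolding FF_def by auto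
      then have "insert c Y \<in> FF U C" "c \<in> insert c Y" "Y = insert c Y - {c}"
        using True cU unfolding FF_def lift_def by auto
      then show "Y \<in> A1 (FF U C) c" unfolding A1_def by blast
    next
      fix Y assume "Y \<in> A1 (FF U C) c"
      then obtain Z where Z: "Z \<in> FF U C" "c \<in> Z" "Y = Z - {c}" unfolding A1_def by auto
      then have Y: "Y \<subseteq> U - {c}" "lift Y = Z" using True unfolding FF_def lift_def by auto
      then show "Y \<in> FF (U - {c}) C'" using Geq[OF Y(1)] Z(1) unfolding FF_def by auto
    qed
    then show ?thesis using True by simp
  next
    case False
    have "FF (U - {c}) C' = A0 (FF U C) c"
    proof (intro set_eqI iffI)
      fix Y assume "Y \<in> FF (U - {c}) C'"
      then have Y: "Y \<subseteq> U - {c}" "lift Y \<notin> GG U C" using Geq unfolding FF_def by auto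
      then show "Y \<in> A0 (FF U C) c" using False unfolding FF_def lift_def A0_def by auto
    next
      fix Y assume "Y \<in> A0 (FF U C) c"
      then have Y: "Y \<subseteq> U - {c}" "Y \<notin> GG U C" unfolding A0_def FF_def by auto
      then show "Y \<in> FF (U - {c}) C'" using Geq[OF Y(1)] False unfolding FF_def lift_def by auto
    qed
    then show ?thesis using False by simp
  qed
  show "ACov (U - {c}) C'"
    unfolding ACov_def
  proof (intro ballI)
    fix p X' assume p: "p \<in> C'" and X': "X' \<in> cube (U - {c}) (fst p) (snd p)"
    have pC: "p \<in> C" and cp: "c \<notin> fst p" using p unfolding C'_def by auto
    have X'U: "X' \<subseteq> U - {c}" and X'S: "X' \<inter> fst p = snd p" using X' unfolding cube_def by auto
    have XU: "lift X' \<subseteq> U" using X'U cU unfolding lift_def by auto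
    have "lift X' \<inter> fst p = X' \<inter> fst p" using cp unfolding lift_def by auto
    then have XS: "lift X' \<inter> fst p = snd p" using X'S by simp
    obtain a where a: "a \<in> fst p" "flip (lift X') a \<in> GG U C"
      using ac pC XU XS unfolding ACov_def cube_def by blast
    have ac': "a \<noteq> c" using a cp by auto
    have "flip (lift X') a = lift (flip X' a)" using ac' unfolding lift_def flip_def by auto
    moreover have "flip X' a \<subseteq> U - {c}" using flip_sub[OF X'U, of a] a ac' pw[OF pC] by auto
    ultimately have "flip X' a \<in> GG (U - {c}) C'" using Geq a(2) by auto
    then show "\<exists>a\<in>fst p. flip X' a \<in> GG (U - {c}) C'" using a(1) by blast
  qed
qed



lemma cube_iff2: "H \<subseteq> S \<Longrightarrow> X \<in> cube U S H \<longleftrightarrow> X \<subseteq> U \<and> (\<forall>u\<in>S. u \<in> X \<longleftrightarrow> u \<in> H)"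
  unfolding cube_def by blast

lemma set_eq_U: "Z \<subseteq> U \<Longrightarrow> P \<subseteq> U \<Longrightarrow> Z = P \<longleftrightarrow> (\<forall>u\<in>U. u \<in> Z \<longleftrightarrow> u \<in> P)"
  by blast

lemma shapeH:
  assumes d: "b1 \<noteq> b2" "b1 \<noteq> b3" "b2 \<noteq> b3" and U: "U = {b1,b2,b3}" and C: "C = {p1,p2,p3}"
    and S: "fst p1 = {b2,b3}" "fst p2 = {b1,b3}" "fst p3 = {b1,b2}"
    and H: "snd p1 \<subseteq> fst p1" "snd p2 \<subseteq> fst p2" "snd p3 \<subseteq> fst p3"
    and c1: "b1 \<in> snd p2 \<longleftrightarrow> b1 \<notin> snd p3"
    and c2: "b2 \<in> snd p1 \<longleftrightarrow> b2 \<notin> snd p3"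
    and c3: "b3 \<in> snd p1 \<longleftrightarrow> b3 \<notin> snd p2"
  shows "\<not> s_extremal (FF U C)"
proof -
  define P where "P = (if b1 \<in> snd p2 then {b1} else {}) \<union> (if b2 \<in> snd p3 then {b2} else {}) \<union>
    (if b3 \<in> snd p1 then {b3} else {})"
  define Q where "Q = U - P"
  have PU: "P \<subseteq> U" and QU: "Q \<subseteq> U" unfolding P_def Q_def U by auto
  have mem: "\<And>Z. Z \<subseteq> U \<Longrightarrow> Z \<in> GG U C \<longleftrightarrow>
      ((b2 \<in> Z \<longleftrightarrow> b2 \<in> snd p1) \<and> (b3 \<in> Z \<longleftrightarrow> b3 \<in> snd p1)) \<or>
      ((b1 \<in> Z \<longleftrightarrow> b1 \<in> snd p2) \<and> (b3 \<in> Z \<longleftrightarrow> b3 \<in> snd p2)) \<or>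
      ((b1 \<in> Z \<longleftrightarrow> b1 \<in> snd p3) \<and> (b2 \<in> Z \<longleftrightarrow> b2 \<in> snd p3))"
    unfolding GG_def C using cube_iff2[OF H(1)] cube_iff2[OF H(2)] cube_iff2[OF H(3)] S by auto
  have Pm: "b1 \<in> P \<longleftrightarrow> b1 \<in> snd p2" "b2 \<in> P \<longleftrightarrow> b2 \<in> snd p3" "b3 \<in> P \<longleftrightarrow> b3 \<in> snd p1"
    unfolding P_def using d by auto
  have Qm: "b1 \<in> Q \<longleftrightarrow> b1 \<notin> snd p2" "b2 \<in> Q \<longleftrightarrow> b2 \<notin> snd p3" "b3 \<in> Q \<longleftrightarrow> b3 \<notin> snd p1"
    unfolding Q_def using Pm U by auto
  have PF: "P \<in> FF U C" unfolding FF_def using mem[OF PU] PU Pm c1 c2 c3 by auto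
  have QF: "Q \<in> FF U C" unfolding FF_def using mem[OF QU] QU Qm c1 c2 c3 by auto
  have E: "U = (P - Q) \<union> (Q - P)" unfolding Q_def using PU by auto
  have only: "Z = P \<or> Z = Q" if "Z \<in> FF U C" for Z
  proof -
    have Z: "Z \<subseteq> U" "Z \<notin> GG U C" using that unfolding FF_def by auto
    have nG: "\<not> (((b2 \<in> Z \<longleftrightarrow> b2 \<in> snd p1) \<and> (b3 \<in> Z \<longleftrightarrow> b3 \<in> snd p1)) \<or>
      ((b1 \<in> Z \<longleftrightarrow> b1 \<in> snd p2) \<and> (b3 \<in> Z \<longleftrightarrow> b3 \<in> snd p2)) \<or>
      ((b1 \<in> Z \<longleftrightarrow> b1 \<in> snd p3) \<and> (b2 \<in> Z \<longleftrightarrow> b2 \<in> snd p3)))"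
      using Z(2) mem[OF Z(1)] by simp
    have "((b1 \<in> Z \<longleftrightarrow> b1 \<in> P) \<and> (b2 \<in> Z \<longleftrightarrow> b2 \<in> P) \<and> (b3 \<in> Z \<longleftrightarrow> b3 \<in> P)) \<or>
          ((b1 \<in> Z \<longleftrightarrow> b1 \<in> Q) \<and> (b2 \<in> Z \<longleftrightarrow> b2 \<in> Q) \<and> (b3 \<in> Z \<longleftrightarrow> b3 \<in> Q))"
      unfolding Pm Qm using nG c1 c2 c3 by argo
    then have "(\<forall>u\<in>U. u \<in> Z \<longleftrightarrow> u \<in> P) \<or> (\<forall>u\<in>U. u \<in> Z \<longleftrightarrow> u \<in> Q)"
      unfolding U by simp
    then show ?thesis using set_eq_U[OF Z(1) PU] set_eq_U[OF Z(1) QU] by blast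
  qed
  have "card U = 3" using d U by simp
  have finU: "finite U" using U by simp
  have FFs: "FF U C \<subseteq> Pow U" unfolding FF_def by auto
  show ?thesis unfolding s_extremal_def
    by (rule W1[OF finU FFs PF QF E]) (use only \<open>card U = 3\<close> in auto)
qed

lemma shapeB:
  assumes d: "w \<noteq> x" "w \<noteq> y" "w \<noteq> z" "x \<noteq> y" "x \<noteq> z" "y \<noteq> z"
    and U: "U = {w,x,y,z}" and C: "C = {c1,c2,c3,c4}"
    and S: "fst c1 = {y,z}" "fst c2 = {z,w}" "fst c3 = {w,x}" "fst c4 = {x,y}"
    and H: "snd c1 \<subseteq> fst c1" "snd c2 \<subseteq> fst c2" "snd c3 \<subseteq> fst c3" "snd c4 \<subseteq> fst c4"
    and cw: "w \<in> snd c2 \<longleftrightarrow> w \<notin> snd c3"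
    and cx: "x \<in> snd c3 \<longleftrightarrow> x \<notin> snd c4"
    and cy: "y \<in> snd c4 \<longleftrightarrow> y \<notin> snd c1"
    and cz: "z \<in> snd c1 \<longleftrightarrow> z \<notin> snd c2"
  shows "\<not> s_extremal (FF U C)"
proof -
  define P where "P = (if y \<in> snd c4 then {y} else {}) \<union> (if x \<in> snd c3 then {x} else {}) \<union>
    (if w \<in> snd c2 then {w} else {}) \<union> (if z \<in> snd c1 then {z} else {})"
  define Q where "Q = U - P"
  have PU: "P \<subseteq> U" and QU: "Q \<subseteq> U" unfolding P_def Q_def U by auto
  have mem: "\<And>Z. Z \<subseteq> U \<Longrightarrow> Z \<in> GG U C \<longleftrightarrow>
      ((y \<in> Z \<longleftrightarrow> y \<in> snd c1) \<and> (z \<in> Z \<longleftrightarrow> z \<in> snd c1)) \<or>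
      ((z \<in> Z \<longleftrightarrow> z \<in> snd c2) \<and> (w \<in> Z \<longleftrightarrow> w \<in> snd c2)) \<or>
      ((w \<in> Z \<longleftrightarrow> w \<in> snd c3) \<and> (x \<in> Z \<longleftrightarrow> x \<in> snd c3)) \<or>
      ((x \<in> Z \<longleftrightarrow> x \<in> snd c4) \<and> (y \<in> Z \<longleftrightarrow> y \<in> snd c4))"
    unfolding GG_def C using cube_iff2[OF H(1)] cube_iff2[OF H(2)] cube_iff2[OF H(3)] cube_iff2[OF H(4)] S by auto
  have Pm: "y \<in> P \<longleftrightarrow> y \<in> snd c4" "x \<in> P \<longleftrightarrow> x \<in> snd c3" "w \<in> P \<longleftrightarrow> w \<in> snd c2" "z \<in> P \<longleftrightarrow> z \<in> snd c1"
    unfolding P_def using d by auto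
  have Qm: "y \<in> Q \<longleftrightarrow> y \<notin> snd c4" "x \<in> Q \<longleftrightarrow> x \<notin> snd c3" "w \<in> Q \<longleftrightarrow> w \<notin> snd c2" "z \<in> Q \<longleftrightarrow> z \<notin> snd c1"
    unfolding Q_def using Pm U by auto
  have PF: "P \<in> FF U C" unfolding FF_def using mem[OF PU] PU Pm cw cx cy cz by auto
  have QF: "Q \<in> FF U C" unfolding FF_def using mem[OF QU] QU Qm cw cx cy cz by auto
  have E: "U = (P - Q) \<union> (Q - P)" unfolding Q_def using PU by auto
  have only: "Z = P \<or> Z = Q" if "Z \<in> FF U C" for Z
  proof -
    have Z: "Z \<subseteq> U" "Z \<notin> GG U C" using that unfolding FF_def by auto
    have nG: "\<not> (((y \<in> Z \<longleftrightarrow> y \<in> snd c1) \<and> (z \<in> Z \<longleftrightarrow> z \<in> snd c1)) \<or>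
      ((z \<in> Z \<longleftrightarrow> z \<in> snd c2) \<and> (w \<in> Z \<longleftrightarrow> w \<in> snd c2)) \<or>
      ((w \<in> Z \<longleftrightarrow> w \<in> snd c3) \<and> (x \<in> Z \<longleftrightarrow> x \<in> snd c3)) \<or>
      ((x \<in> Z \<longleftrightarrow> x \<in> snd c4) \<and> (y \<in> Z \<longleftrightarrow> y \<in> snd c4)))"
      using Z(2) mem[OF Z(1)] by simp
    have "((w \<in> Z \<longleftrightarrow> w \<in> P) \<and> (x \<in> Z \<longleftrightarrow> x \<in> P) \<and> (y \<in> Z \<longleftrightarrow> y \<in> P) \<and> (z \<in> Z \<longleftrightarrow> z \<in> P)) \<or>
          ((w \<in> Z \<longleftrightarrow> w \<in> Q) \<and> (x \<in> Z \<longleftrightarrow> x \<in> Q) \<and> (y \<in> Z \<longleftrightarrow> y \<in> Q) \<and> (z \<in> Z \<longleftrightarrow> z \<in> Q))"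
      unfolding Pm Qm using nG cw cx cy cz by argo
    then have "(\<forall>u\<in>U. u \<in> Z \<longleftrightarrow> u \<in> P) \<or> (\<forall>u\<in>U. u \<in> Z \<longleftrightarrow> u \<in> Q)"
      unfolding U by simp
    then show ?thesis using set_eq_U[OF Z(1) PU] set_eq_U[OF Z(1) QU] by blast
  qed
  have "card U = 4" using d U by simp
  have finU: "finite U" using U by simp
  have FFs: "FF U C \<subseteq> Pow U" unfolding FF_def by auto
  show ?thesis unfolding s_extremal_def
    by (rule W1[OF finU FFs PF QF E]) (use only \<open>card U = 4\<close> in auto)
qed

lemma shapeA:
  assumes d: "s \<noteq> t" "s \<noteq> r" "s \<noteq> d" "t \<noteq> r" "t \<noteq> d" "r \<noteq> d"
    and U: "U = {s,t,r,d}" and C: "C = {pk,pi,pj,a}"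
    and S: "fst pk = {r,d}" "fst pi = {s,d}" "fst pj = {t,d}" "fst a = {s,t,r}"
    and H: "snd pk \<subseteq> fst pk" "snd pi \<subseteq> fst pi" "snd pj \<subseteq> fst pj" "snd a \<subseteq> fst a"
    and cs: "s \<in> snd pi \<longleftrightarrow> s \<notin> snd a"
    and ct: "t \<in> snd pj \<longleftrightarrow> t \<notin> snd a"
    and cr: "r \<in> snd pk \<longleftrightarrow> r \<notin> snd a"
    and cd: "d \<in> snd pi \<longleftrightarrow> d \<notin> snd pj"
  shows "\<not> s_extremal (FF U C)"
proof -
  define P where "P = (if s \<in> snd a then {s} else {}) \<union> (if t \<in> snd a then {} else {t}) \<union>
    (if d \<in> snd pi then {d} else {}) \<union> (if r \<in> snd a then {r} else {})"
  define Q where "Q = (if s \<in> snd a then {} else {s}) \<union> (if t \<in> snd a then {t} else {}) \<union>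
    (if d \<in> snd pi then {} else {d}) \<union> (if r \<in> snd a then {r} else {})"
  have PU: "P \<subseteq> U" and QU: "Q \<subseteq> U" unfolding P_def Q_def U by auto
  have mem: "\<And>Z. Z \<subseteq> U \<Longrightarrow> Z \<in> GG U C \<longleftrightarrow>
      ((r \<in> Z \<longleftrightarrow> r \<in> snd pk) \<and> (d \<in> Z \<longleftrightarrow> d \<in> snd pk)) \<or>
      ((s \<in> Z \<longleftrightarrow> s \<in> snd pi) \<and> (d \<in> Z \<longleftrightarrow> d \<in> snd pi)) \<or>
      ((t \<in> Z \<longleftrightarrow> t \<in> snd pj) \<and> (d \<in> Z \<longleftrightarrow> d \<in> snd pj)) \<or>
      ((s \<in> Z \<longleftrightarrow> s \<in> snd a) \<and> (t \<in> Z \<longleftrightarrow> t \<in> snd a) \<and> (r \<in> Z \<longleftrightarrow> r \<in> snd a))"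
    unfolding GG_def C using cube_iff2[OF H(1)] cube_iff2[OF H(2)] cube_iff2[OF H(3)] cube_iff2[OF H(4)] S by auto
  have Pm: "s \<in> P \<longleftrightarrow> s \<in> snd a" "t \<in> P \<longleftrightarrow> t \<notin> snd a" "d \<in> P \<longleftrightarrow> d \<in> snd pi" "r \<in> P \<longleftrightarrow> r \<in> snd a"
    unfolding P_def using d by auto
  have Qm: "s \<in> Q \<longleftrightarrow> s \<notin> snd a" "t \<in> Q \<longleftrightarrow> t \<in> snd a" "d \<in> Q \<longleftrightarrow> d \<notin> snd pi" "r \<in> Q \<longleftrightarrow> r \<in> snd a"
    unfolding Q_def using d by auto
  have PF: "P \<in> FF U C" unfolding FF_def using mem[OF PU] PU Pm cs ct cr cd by auto
  have QF: "Q \<in> FF U C" unfolding FF_def using mem[OF QU] QU Qm cs ct cr cd by auto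
  have E: "{s,t,d} = (P - Q) \<union> (Q - P)"
  proof -
    have "(P - Q) \<union> (Q - P) \<subseteq> U" using PU QU by auto
    moreover have "r \<notin> (P - Q) \<union> (Q - P)" using Pm Qm by auto
    ultimately have 1: "(P - Q) \<union> (Q - P) \<subseteq> {s,t,d}" unfolding U by blast
    have "s \<in> (P - Q) \<union> (Q - P)" "t \<in> (P - Q) \<union> (Q - P)" "d \<in> (P - Q) \<union> (Q - P)" using Pm Qm by auto
    then have 2: "{s,t,d} \<subseteq> (P - Q) \<union> (Q - P)" by blast
    show ?thesis using 1 2 by (rule equalityI[rotated])
  qed
  have only: "Z = P \<or> Z = Q" if "Z \<in> FF U C" "Z - {s,t,d} = P - {s,t,d}" for Z
  proof -
    have Z: "Z \<subseteq> U" "Z \<notin> GG U C" using that unfolding FF_def by auto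
    have rZ: "r \<in> Z \<longleftrightarrow> r \<in> snd a" using that(2) Pm d by blast
    have nG: "\<not> (((r \<in> Z \<longleftrightarrow> r \<in> snd pk) \<and> (d \<in> Z \<longleftrightarrow> d \<in> snd pk)) \<or>
      ((s \<in> Z \<longleftrightarrow> s \<in> snd pi) \<and> (d \<in> Z \<longleftrightarrow> d \<in> snd pi)) \<or>
      ((t \<in> Z \<longleftrightarrow> t \<in> snd pj) \<and> (d \<in> Z \<longleftrightarrow> d \<in> snd pj)) \<or>
      ((s \<in> Z \<longleftrightarrow> s \<in> snd a) \<and> (t \<in> Z \<longleftrightarrow> t \<in> snd a) \<and> (r \<in> Z \<longleftrightarrow> r \<in> snd a)))"
      using Z(2) mem[OF Z(1)] by simp
    have "((s \<in> Z \<longleftrightarrow> s \<in> P) \<and> (t \<in> Z \<longleftrightarrow> t \<in> P) \<and> (r \<in> Z \<longleftrightarrow> r \<in> P) \<and> (d \<in> Z \<longleftrightarrow> d \<in> P)) \<or>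
          ((s \<in> Z \<longleftrightarrow> s \<in> Q) \<and> (t \<in> Z \<longleftrightarrow> t \<in> Q) \<and> (r \<in> Z \<longleftrightarrow> r \<in> Q) \<and> (d \<in> Z \<longleftrightarrow> d \<in> Q))"
      unfolding Pm Qm using nG rZ cs ct cr cd by argo
    then have "(\<forall>u\<in>U. u \<in> Z \<longleftrightarrow> u \<in> P) \<or> (\<forall>u\<in>U. u \<in> Z \<longleftrightarrow> u \<in> Q)"
      unfolding U by simp
    then show ?thesis using set_eq_U[OF Z(1) PU] set_eq_U[OF Z(1) QU] by blast
  qed
  have "card {s,t,d} = 3" using d by simp
  have finU: "finite U" using U by simp
  have FFs: "FF U C \<subseteq> Pow U" unfolding FF_def by auto
  show ?thesis unfolding s_extremal_def
    by (rule W1[OF finU FFs PF QF E]) (use only \<open>card {s,t,d} = 3\<close> in auto)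
qed

lemma shapeCw:
  assumes d: "bp \<noteq> bq" "bp \<noteq> br" "bp \<noteq> bs" "bq \<noteq> br" "bq \<noteq> bs" "br \<noteq> bs"
    and U: "U = {bp,bq,br,bs}" and C: "C = {p,q,r,s}"
    and S: "fst p = {bq,br,bs}" "fst q = {bp,br,bs}" "fst r = {bp,bq,bs}" "fst s = {bp,bq,br}"
    and H: "snd p \<subseteq> fst p" "snd q \<subseteq> fst q" "snd r \<subseteq> fst r" "snd s \<subseteq> fst s"
    and far: "br \<in> snd p \<longleftrightarrow> br \<notin> snd q" "bs \<in> snd p \<longleftrightarrow> bs \<notin> snd q"
    and av: "\<not> ((bp \<in> snd r \<longleftrightarrow> bp \<in> snd q) \<and> (bq \<in> snd r \<longleftrightarrow> bq \<in> snd p) \<and> (bs \<in> snd r \<longleftrightarrow> bs \<in> snd q))"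
      "\<not> ((bp \<in> snd s \<longleftrightarrow> bp \<in> snd q) \<and> (bq \<in> snd s \<longleftrightarrow> bq \<in> snd p) \<and> (br \<in> snd s \<longleftrightarrow> br \<in> snd p))"
      "\<not> ((bp \<in> snd r \<longleftrightarrow> bp \<in> snd q) \<and> (bq \<in> snd r \<longleftrightarrow> bq \<in> snd p) \<and> (bs \<in> snd r \<longleftrightarrow> bs \<in> snd p))"
      "\<not> ((bp \<in> snd s \<longleftrightarrow> bp \<in> snd q) \<and> (bq \<in> snd s \<longleftrightarrow> bq \<in> snd p) \<and> (br \<in> snd s \<longleftrightarrow> br \<in> snd q))"
  shows "\<not> s_extremal (FF U C)"
proof -
  define P where "P = (if bp \<in> snd q then {bp} else {}) \<union> (if bq \<in> snd p then {bq} else {}) \<union>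
    (if br \<in> snd p then {br} else {}) \<union> (if bs \<in> snd q then {bs} else {})"
  define Q where "Q = (if bp \<in> snd q then {bp} else {}) \<union> (if bq \<in> snd p then {bq} else {}) \<union>
    (if br \<in> snd q then {br} else {}) \<union> (if bs \<in> snd p then {bs} else {})"
  have PU: "P \<subseteq> U" and QU: "Q \<subseteq> U" unfolding P_def Q_def U by auto
  have mem: "\<And>Z. Z \<subseteq> U \<Longrightarrow> Z \<in> GG U C \<longleftrightarrow>
      ((bq \<in> Z \<longleftrightarrow> bq \<in> snd p) \<and> (br \<in> Z \<longleftrightarrow> br \<in> snd p) \<and> (bs \<in> Z \<longleftrightarrow> bs \<in> snd p)) \<or>
      ((bp \<in> Z \<longleftrightarrow> bp \<in> snd q) \<and> (br \<in> Z \<longleftrightarrow> br \<in> snd q) \<and> (bs \<in> Z \<longleftrightarrow> bs \<in> snd q)) \<or>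
      ((bp \<in> Z \<longleftrightarrow> bp \<in> snd r) \<and> (bq \<in> Z \<longleftrightarrow> bq \<in> snd r) \<and> (bs \<in> Z \<longleftrightarrow> bs \<in> snd r)) \<or>
      ((bp \<in> Z \<longleftrightarrow> bp \<in> snd s) \<and> (bq \<in> Z \<longleftrightarrow> bq \<in> snd s) \<and> (br \<in> Z \<longleftrightarrow> br \<in> snd s))"
    unfolding GG_def C using cube_iff2[OF H(1)] cube_iff2[OF H(2)] cube_iff2[OF H(3)] cube_iff2[OF H(4)] S by auto
  have Pm: "bp \<in> P \<longleftrightarrow> bp \<in> snd q" "bq \<in> P \<longleftrightarrow> bq \<in> snd p" "br \<in> P \<longleftrightarrow> br \<in> snd p" "bs \<in> P \<longleftrightarrow> bs \<in> snd q"
    unfolding P_def using d by auto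
  have Qm: "bp \<in> Q \<longleftrightarrow> bp \<in> snd q" "bq \<in> Q \<longleftrightarrow> bq \<in> snd p" "br \<in> Q \<longleftrightarrow> br \<in> snd q" "bs \<in> Q \<longleftrightarrow> bs \<in> snd p"
    unfolding Q_def using d by auto
  have PF: "P \<in> FF U C" unfolding FF_def using mem[OF PU] PU Pm far av by auto
  have QF: "Q \<in> FF U C" unfolding FF_def using mem[OF QU] QU Qm far av by auto
  have E: "{br,bs} = (P - Q) \<union> (Q - P)"
  proof -
    have "(P - Q) \<union> (Q - P) \<subseteq> U" using PU QU by auto
    moreover have "bp \<notin> (P - Q) \<union> (Q - P)" "bq \<notin> (P - Q) \<union> (Q - P)" using Pm Qm by auto
    ultimately have 1: "(P - Q) \<union> (Q - P) \<subseteq> {br,bs}" unfolding U by blast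
    have "br \<in> (P - Q) \<union> (Q - P)" "bs \<in> (P - Q) \<union> (Q - P)" using Pm Qm far by auto
    then have 2: "{br,bs} \<subseteq> (P - Q) \<union> (Q - P)" by blast
    show ?thesis using 1 2 by (rule equalityI[rotated])
  qed
  have only: "Z = P \<or> Z = Q" if "Z \<in> FF U C" "Z - {br,bs} = P - {br,bs}" for Z
  proof -
    have Z: "Z \<subseteq> U" "Z \<notin> GG U C" using that unfolding FF_def by auto
    have pZ: "bp \<in> Z \<longleftrightarrow> bp \<in> snd q" "bq \<in> Z \<longleftrightarrow> bq \<in> snd p" using that(2) Pm d by blast+
    have nG: "\<not> (((bq \<in> Z \<longleftrightarrow> bq \<in> snd p) \<and> (br \<in> Z \<longleftrightarrow> br \<in> snd p) \<and> (bs \<in> Z \<longleftrightarrow> bs \<in> snd p)) \<or>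
      ((bp \<in> Z \<longleftrightarrow> bp \<in> snd q) \<and> (br \<in> Z \<longleftrightarrow> br \<in> snd q) \<and> (bs \<in> Z \<longleftrightarrow> bs \<in> snd q)) \<or>
      ((bp \<in> Z \<longleftrightarrow> bp \<in> snd r) \<and> (bq \<in> Z \<longleftrightarrow> bq \<in> snd r) \<and> (bs \<in> Z \<longleftrightarrow> bs \<in> snd r)) \<or>
      ((bp \<in> Z \<longleftrightarrow> bp \<in> snd s) \<and> (bq \<in> Z \<longleftrightarrow> bq \<in> snd s) \<and> (br \<in> Z \<longleftrightarrow> br \<in> snd s)))"
      using Z(2) mem[OF Z(1)] by simp
    have "((bp \<in> Z \<longleftrightarrow> bp \<in> P) \<and> (bq \<in> Z \<longleftrightarrow> bq \<in> P) \<and> (br \<in> Z \<longleftrightarrow> br \<in> P) \<and> (bs \<in> Z \<longleftrightarrow> bs \<in> P)) \<or>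
          ((bp \<in> Z \<longleftrightarrow> bp \<in> Q) \<and> (bq \<in> Z \<longleftrightarrow> bq \<in> Q) \<and> (br \<in> Z \<longleftrightarrow> br \<in> Q) \<and> (bs \<in> Z \<longleftrightarrow> bs \<in> Q))"
      unfolding Pm Qm using nG pZ far by argo
    then have "(\<forall>u\<in>U. u \<in> Z \<longleftrightarrow> u \<in> P) \<or> (\<forall>u\<in>U. u \<in> Z \<longleftrightarrow> u \<in> Q)"
      unfolding U by simp
    then show ?thesis using set_eq_U[OF Z(1) PU] set_eq_U[OF Z(1) QU] by blast
  qed
  have "card {br,bs} = 2" using d by simp
  have finU: "finite U" using U by simp
  have FFs: "FF U C \<subseteq> Pow U" unfolding FF_def by auto
  show ?thesis unfolding s_extremal_def
    by (rule W1[OF finU FFs PF QF E]) (use only \<open>card {br,bs} = 2\<close> in auto)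
qed


lemma card4_obtain:
  assumes "card A = 4"
  obtains a b c d where "A = {a,b,c,d}" "a \<noteq> b" "a \<noteq> c" "a \<noteq> d" "b \<noteq> c" "b \<noteq> d" "c \<noteq> d"
proof -
  obtain a B where aB: "A = insert a B" "a \<notin> B" "card B = 3"
    using card_eq_SucD[of A 3] assms by auto
  then obtain b c d where "B = {b,c,d}" "b \<noteq> c" "c \<noteq> d" "b \<noteq> d" using card_3_iff by metis
  then show ?thesis using that aB by auto
qed

lemma cube_iff: "H \<subseteq> S \<Longrightarrow> X \<in> cube U S H \<longleftrightarrow> X \<subseteq> U \<and> (\<forall>u\<in>S. u \<in> X \<longleftrightarrow> u \<in> H)"
  unfolding cube_def by blast

locale B =
  fixes U :: "nat set" and C :: "(nat set \<times> nat set) set"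
  assumes wf: "wfc U C" and ne: "C \<noteq> {}" and k4: "card C \<le> 4" and ac: "ACov U C"
    and crit: "\<forall>c\<in>U. critical C c" and conf: "\<forall>c\<in>U. conflict C c"
begin

definition D :: "nat set \<times> nat set \<Rightarrow> nat set" where "D p = U - fst p"

lemma finU: "finite U" using wf unfolding wfc_def by simp
lemma pw: "p \<in> C \<Longrightarrow> snd p \<subseteq> fst p \<and> fst p \<subseteq> U" using wf unfolding wfc_def by blast
lemma ach: "p \<in> C \<Longrightarrow> q \<in> C \<Longrightarrow> fst p \<subseteq> fst q \<Longrightarrow> p = q" using wf unfolding wfc_def by blast
lemma finC: "finite C"
proof -
  have "C \<subseteq> Pow U \<times> Pow U"
  proof
    fix p assume "p \<in> C" then show "p \<in> Pow U \<times> Pow U" using pw[of p] by (cases p) auto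
  qed
  then show ?thesis using finU by (meson finite_Pow_iff finite_SigmaI finite_subset)
qed

lemma S_eq: assumes "p \<in> C" shows "fst p = U - D p" using pw[OF assms] unfolding D_def by auto

lemma cov:
  assumes p: "p \<in> C" and X: "X \<in> cube U (fst p) (snd p)" and a: "a \<in> fst p"
    and q: "q \<in> C" "flip X a \<in> cube U (fst q) (snd q)"
  shows "q \<noteq> p" "\<And>y. y \<in> fst q \<Longrightarrow> y \<noteq> a \<Longrightarrow> (y \<in> X \<longleftrightarrow> y \<in> snd q)"
proof -
  have XS: "X \<inter> fst p = snd p" using X unfolding cube_def by auto
  have fS: "flip X a \<inter> fst q = snd q" using q unfolding cube_def by auto
  show "q \<noteq> p"
  proof
    assume "q = p"
    then have "a \<in> flip X a \<inter> fst q \<longleftrightarrow> a \<in> snd p" using fS by simp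
    then have "a \<in> flip X a \<longleftrightarrow> a \<in> snd p" using a \<open>q = p\<close> by simp
    moreover have "a \<in> X \<longleftrightarrow> a \<in> snd p" using XS a by blast
    ultimately show False by (simp add: flip_mem)
  qed
  fix y assume y: "y \<in> fst q" "y \<noteq> a"
  have "y \<in> flip X a \<inter> fst q \<longleftrightarrow> y \<in> snd q" using fS by simp
  then have "y \<in> flip X a \<longleftrightarrow> y \<in> snd q" using y(1) by simp
  moreover have "y \<in> flip X a \<longleftrightarrow> y \<in> X" using y(2) by (simp add: flip_mem)
  ultimately show "y \<in> X \<longleftrightarrow> y \<in> snd q" by simp
qed

definition blocks :: "nat set \<times> nat set \<Rightarrow> nat set \<times> nat set \<Rightarrow> nat set \<Rightarrow> bool" where
  "blocks p q X \<longleftrightarrow> (\<exists>y\<in>fst q - fst p. (y \<in> X \<longleftrightarrow> y \<notin> snd q)) \<or>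
     (\<exists>y1 y2. y1 \<noteq> y2 \<and> y1 \<in> fst p \<and> y1 \<in> fst q \<and> y2 \<in> fst p \<and> y2 \<in> fst q \<and>
        (y1 \<in> snd p \<longleftrightarrow> y1 \<notin> snd q) \<and> (y2 \<in> snd p \<longleftrightarrow> y2 \<notin> snd q))"

lemma break:
  assumes p: "p \<in> C" and X: "X \<in> cube U (fst p) (snd p)"
    and bl: "\<And>q. q \<in> C \<Longrightarrow> q \<noteq> p \<Longrightarrow> blocks p q X"
  shows False
proof -
  obtain a where a: "a \<in> fst p" "flip X a \<in> GG U C" using ac p X unfolding ACov_def by blast
  then obtain q where q: "q \<in> C" "flip X a \<in> cube U (fst q) (snd q)" unfolding GG_def by auto
  note cv = cov[OF p X a(1) q]
  have XS: "X \<inter> fst p = snd p" using X unfolding cube_def by auto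
  from bl[OF q(1) cv(1)] show False
    unfolding blocks_def
  proof (elim disjE exE conjE bexE)
    fix y assume "y \<in> fst q - fst p" "(y \<in> X) = (y \<notin> snd q)"
    then show False using cv(2)[of y] a(1) by auto
  next
    fix y1 y2 assume h: "y1 \<noteq> y2" "y1 \<in> fst p" "y1 \<in> fst q" "y2 \<in> fst p" "y2 \<in> fst q"
      "(y1 \<in> snd p) = (y1 \<notin> snd q)" "(y2 \<in> snd p) = (y2 \<notin> snd q)"
    have "y1 \<noteq> a \<or> y2 \<noteq> a" using h(1) by auto
    then show False
    proof
      assume "y1 \<noteq> a" then show False using cv(2)[OF h(3)] h XS by blast
    next
      assume "y2 \<noteq> a" then show False using cv(2)[OF h(5)] h XS by blast
    qed
  qed
qed

lemma free2:
  assumes "c \<in> U" "r1 \<in> C" "r2 \<in> C" "r3 \<in> C" "r1 \<noteq> r2" "r1 \<noteq> r3" "r2 \<noteq> r3"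
    "c \<notin> fst r1" "c \<notin> fst r2" "c \<notin> fst r3"
  shows False
proof -
  obtain p q where pq: "p \<in> C" "q \<in> C" "c \<in> fst p" "c \<in> fst q" "c \<in> snd p" "c \<notin> snd q"
    using conf assms(1) unfolding conflict_def by blast
  have "{p, q, r1, r2, r3} \<subseteq> C" using pq assms by auto
  moreover have "p \<noteq> q" "p \<noteq> r1" "p \<noteq> r2" "p \<noteq> r3" "q \<noteq> r1" "q \<noteq> r2" "q \<noteq> r3"
    using pq assms by auto
  moreover have "card {p, q, r1, r2, r3} = 5" using calculation(2-) assms(5-7) by simp
  ultimately have "5 \<le> card C" using finC by (metis card_mono)
  then show False using k4 by simp
qed

lemma UD: "c \<in> U \<Longrightarrow> \<exists>q\<in>C. c \<in> D q"
  using crit unfolding critical_def D_def using pw by blast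

lemma D_ne: assumes "p \<in> C" shows "D p \<noteq> {}"
proof
  assume "D p = {}"
  then have Sp: "fst p = U" using S_eq[OF assms] by auto
  have Cp: "C = {p}"
  proof -
    have "\<And>q. q \<in> C \<Longrightarrow> q = p"
    proof -
      fix q assume "q \<in> C" then show "q = p" using ach[OF \<open>q \<in> C\<close> assms] pw[OF \<open>q \<in> C\<close>] Sp by simp
    qed
    then show ?thesis using assms by blast
  qed
  have X: "snd p \<in> cube U (fst p) (snd p)" using pw[OF assms] unfolding cube_def by auto
  show False using break[OF assms X] Cp by blast
qed


lemma breakers:
  assumes p: "p \<in> C" and u: "\<And>q. q \<in> C \<Longrightarrow> q \<noteq> p \<Longrightarrow> u q \<in> D p \<and> u q \<in> fst q"
    and inj: "\<And>q q'. q \<in> C \<Longrightarrow> q' \<in> C \<Longrightarrow> q \<noteq> p \<Longrightarrow> q' \<noteq> p \<Longrightarrow> u q = u q' \<Longrightarrow> q = q'"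
  shows False
proof -
  define A where "A = {u q | q. q \<in> C \<and> q \<noteq> p \<and> u q \<notin> snd q}"
  have AD: "A \<subseteq> D p" using u unfolding A_def by auto
  define X where "X = snd p \<union> A"
  have X: "X \<in> cube U (fst p) (snd p)"
    using AD pw[OF p] unfolding X_def cube_def D_def by auto
  show False
  proof (rule break[OF p X])
    fix q assume q: "q \<in> C" "q \<noteq> p"
    have uq: "u q \<in> fst q - fst p" using u[OF q] unfolding D_def by auto
    have "u q \<in> X \<longleftrightarrow> u q \<in> A" using uq pw[OF p] unfolding X_def by auto
    also have "\<dots> \<longleftrightarrow> u q \<notin> snd q"
    proof
      assume "u q \<in> A"
      then obtain q' where "q' \<in> C" "q' \<noteq> p" "u q' \<notin> snd q'" "u q = u q'" unfolding A_def by auto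
      then show "u q \<notin> snd q" using inj[OF q(1) _ q(2)] by metis
    next
      assume "u q \<notin> snd q" then show "u q \<in> A" using q unfolding A_def by blast
    qed
    finally show "blocks p q X" unfolding blocks_def using uq by blast
  qed
qed

lemma sdr3:
  assumes "e1 \<noteq> e2" "a \<noteq> e1" "a \<noteq> e2" "a \<in> M1" "b0 \<in> M2" "c0 \<in> M3"
    "(e1 \<in> M1 \<and> e1 \<in> M2) \<or> (e1 \<in> M1 \<and> e1 \<in> M3) \<or> (e1 \<in> M2 \<and> e1 \<in> M3)"
    "(e2 \<in> M1 \<and> e2 \<in> M2) \<or> (e2 \<in> M1 \<and> e2 \<in> M3) \<or> (e2 \<in> M2 \<and> e2 \<in> M3)"
  shows "\<exists>a' b' c'. a' \<in> {a,b0,c0,e1,e2} \<and> b' \<in> {a,b0,c0,e1,e2} \<and> c' \<in> {a,b0,c0,e1,e2} \<and>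
    a' \<noteq> b' \<and> a' \<noteq> c' \<and> b' \<noteq> c' \<and> a' \<in> M1 \<and> b' \<in> M2 \<and> c' \<in> M3"
proof -
  have c1: "e1 \<in> M2 \<or> e1 \<in> M3" "e2 \<in> M2 \<or> e2 \<in> M3" using assms(7,8) by blast+
  show ?thesis
  proof (cases "e1 \<in> M2 \<and> e2 \<in> M3")
    case True then show ?thesis using assms(1-4) by blast
  next
    case F1: False
    show ?thesis
    proof (cases "e2 \<in> M2 \<and> e1 \<in> M3")
      case True then show ?thesis using assms(1-4) by blast
    next
      case F2: False
      have "(e1 \<notin> M3 \<and> e2 \<notin> M3) \<or> (e1 \<notin> M2 \<and> e2 \<notin> M2)" using c1 F1 F2 by blast
      then show ?thesis
      proof
        assume h: "e1 \<notin> M3 \<and> e2 \<notin> M3"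
        then have "e1 \<in> M1" "e1 \<in> M2" "e2 \<in> M1" "e2 \<in> M2" using assms(7,8) by blast+
        moreover have "c0 \<noteq> e1" "c0 \<noteq> e2" using h assms(6) by blast+
        ultimately show ?thesis using assms(1-6)
          by (cases "c0 = a") (metis insertCI)+
      next
        assume h: "e1 \<notin> M2 \<and> e2 \<notin> M2"
        then have "e1 \<in> M1" "e1 \<in> M3" "e2 \<in> M1" "e2 \<in> M3" using assms(7,8) by blast+
        moreover have "b0 \<noteq> e1" "b0 \<noteq> e2" using h assms(5) by blast+
        ultimately show ?thesis using assms(1-6)
          by (cases "b0 = a") (metis insertCI)+
      qed
    qed
  qed
qed

lemma card_ge3: "3 \<le> card C"
proof (rule ccontr)
  assume "\<not> 3 \<le> card C"
  then have c: "card C \<le> 2" by simp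
  obtain p where p: "p \<in> C" using ne by auto
  have "\<exists>q. C \<subseteq> {p, q}"
  proof (cases "C - {p} = {}")
    case True then show ?thesis by auto
  next
    case False
    then obtain q where q: "q \<in> C - {p}" by auto
    have "C - {p} \<subseteq> {q}"
    proof
      fix r assume r: "r \<in> C - {p}"
      show "r \<in> {q}"
      proof (rule ccontr)
        assume "r \<notin> {q}"
        then have "{p, q, r} \<subseteq> C" "card {p,q,r} = 3" using p q r by auto
        then show False using c finC by (metis card_mono not_less_eq_eq numeral_3_eq_3 numeral_2_eq_2)
      qed
    qed
    then show ?thesis by blast
  qed
  then obtain q where Cq: "C \<subseteq> {p, q}" by blast
  show False
  proof (cases "q \<in> C \<and> q \<noteq> p")
    case True
    have "\<not> fst q \<subseteq> fst p" using ach[OF True[THEN conjunct1] p] True by blast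
    then obtain y where y: "y \<in> fst q" "y \<notin> fst p" by blast
    then have "y \<in> D p" using pw[OF True[THEN conjunct1]] unfolding D_def by auto
    show False
      by (rule breakers[OF p, of "\<lambda>_. y"]) (use Cq y \<open>y \<in> D p\<close> in auto)
  next
    case False
    show False by (rule breakers[OF p, of "\<lambda>_. 0"]) (use Cq False in auto)
  qed
qed

lemma others3:
  assumes "card C = 4" "p \<in> C"
  obtains q1 q2 q3 where "C = {p, q1, q2, q3}" "p \<noteq> q1" "p \<noteq> q2" "p \<noteq> q3" "q1 \<noteq> q2" "q1 \<noteq> q3" "q2 \<noteq> q3"
proof -
  have "card (C - {p}) = 3" using assms finC by simp
  then obtain q1 q2 q3 where "C - {p} = {q1,q2,q3}" "q1 \<noteq> q2" "q2 \<noteq> q3" "q1 \<noteq> q3" using card_3_iff by metis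
  then show ?thesis using that assms(2) by (metis Diff_iff insert_Diff insertCI)
qed

lemma others2:
  assumes "card C = 3" "p \<in> C"
  obtains q1 q2 where "C = {p, q1, q2}" "p \<noteq> q1" "p \<noteq> q2" "q1 \<noteq> q2"
proof -
  have "card (C - {p}) = 2" using assms finC by simp
  then obtain q1 q2 where "C - {p} = {q1,q2}" "q1 \<noteq> q2" using card_2_iff by metis
  then show ?thesis using that assms(2) by (metis Diff_iff insert_Diff insertCI)
qed

lemma dims4:
  assumes k: "card C = 4" and p: "p \<in> C" and xyz: "x \<in> D p" "y \<in> D p" "z \<in> D p" "x \<noteq> y" "x \<noteq> z" "y \<noteq> z"
  shows False
proof -
  obtain q1 q2 q3 where C: "C = {p, q1, q2, q3}" "p \<noteq> q1" "p \<noteq> q2" "p \<noteq> q3" "q1 \<noteq> q2" "q1 \<noteq> q3" "q2 \<noteq> q3"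
    using others3[OF k p] by metis
  have inC: "q1 \<in> C" "q2 \<in> C" "q3 \<in> C" using C by auto
  have pD: "x \<notin> fst p" "y \<notin> fst p" "z \<notin> fst p" "x \<in> U" "y \<in> U" "z \<in> U" using xyz unfolding D_def by auto
  have two: "(w \<in> fst q1 \<and> w \<in> fst q2) \<or> (w \<in> fst q1 \<and> w \<in> fst q3) \<or> (w \<in> fst q2 \<and> w \<in> fst q3)"
    if "w \<in> U" "w \<notin> fst p" for w
  proof (rule ccontr)
    assume "\<not> ?thesis"
    then have "(w \<notin> fst q1 \<and> w \<notin> fst q2) \<or> (w \<notin> fst q1 \<and> w \<notin> fst q3) \<or> (w \<notin> fst q2 \<and> w \<notin> fst q3)" by blast
    then show False using free2[OF that(1) p] inC C that(2) by metis
  qed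
  have ne1: "\<exists>w. w \<in> D p \<and> w \<in> fst q" if "q \<in> C" "q \<noteq> p" for q
  proof -
    have "\<not> fst q \<subseteq> fst p" using ach[OF that(1) p] that(2) by blast
    then obtain w where "w \<in> fst q" "w \<notin> fst p" by blast
    then show ?thesis using pw[OF that(1)] unfolding D_def by blast
  qed
  obtain a0 where a0: "a0 \<in> D p" "a0 \<in> fst q1" using ne1 inC C by blast
  obtain b0 where b0: "b0 \<in> D p" "b0 \<in> fst q2" using ne1 inC C by blast
  obtain c0 where c0: "c0 \<in> D p" "c0 \<in> fst q3" using ne1 inC C by blast
  obtain e1 e2 where e: "e1 \<in> {x,y,z}" "e2 \<in> {x,y,z}" "e1 \<noteq> e2" "a0 \<noteq> e1" "a0 \<noteq> e2"
  proof (cases "a0 = x")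
    case True then show ?thesis using that xyz by blast
  next
    case False
    show ?thesis
    proof (cases "a0 = y")
      case True then show ?thesis using that xyz \<open>a0 \<noteq> x\<close> by blast
    next
      case False then show ?thesis using that xyz \<open>a0 \<noteq> x\<close> by blast
    qed
  qed
  have eU: "e1 \<in> U" "e1 \<notin> fst p" "e2 \<in> U" "e2 \<notin> fst p" using e pD by auto
  obtain a b c where abc: "a \<in> {a0,b0,c0,e1,e2}" "b \<in> {a0,b0,c0,e1,e2}" "c \<in> {a0,b0,c0,e1,e2}"
    "a \<noteq> b" "a \<noteq> c" "b \<noteq> c" "a \<in> fst q1" "b \<in> fst q2" "c \<in> fst q3"
    using sdr3[OF e(3-5) a0(2) b0(2) c0(2) two[OF eU(1,2)] two[OF eU(3,4)]] by blast
  have abcD: "a \<in> D p" "b \<in> D p" "c \<in> D p" using abc a0 b0 c0 e xyz by auto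
  define u where "u q = (if q = q1 then a else if q = q2 then b else c)" for q
  show False
  proof (rule breakers[OF p, of u])
    fix q assume "q \<in> C" "q \<noteq> p"
    then have "q = q1 \<or> q = q2 \<or> q = q3" using C by auto
    then show "u q \<in> D p \<and> u q \<in> fst q" using abc abcD C unfolding u_def by auto
  next
    fix q q' assume "q \<in> C" "q' \<in> C" "q \<noteq> p" "q' \<noteq> p" "u q = u q'"
    moreover have "q = q1 \<or> q = q2 \<or> q = q3" "q' = q1 \<or> q' = q2 \<or> q' = q3" using C calculation by auto
    ultimately show "q = q'" using abc C unfolding u_def by (auto split: if_splits)
  qed
qed

lemma dims3:
  assumes k: "card C = 3" and p: "p \<in> C" and xy: "x \<in> D p" "y \<in> D p" "x \<noteq> y"
  shows False
proof -
  obtain q1 q2 where C: "C = {p, q1, q2}" "p \<noteq> q1" "p \<noteq> q2" "q1 \<noteq> q2"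
    using others2[OF k p] by metis
  have inC: "q1 \<in> C" "q2 \<in> C" using C by auto
  have fixed: "w \<in> fst q1 \<and> w \<in> fst q2" if "w \<in> D p" for w
  proof -
    have w: "w \<in> U" "w \<notin> fst p" using that unfolding D_def by auto
    obtain r s where rs: "r \<in> C" "s \<in> C" "w \<in> fst r" "w \<in> fst s" "w \<in> snd r" "w \<notin> snd s"
      using conf w(1) unfolding conflict_def by blast
    have "r \<noteq> s" using rs by auto
    moreover have "r \<noteq> p" "s \<noteq> p" using rs w by auto
    ultimately have "{r, s} = {q1, q2}" using rs C by auto
    then show ?thesis using rs by auto
  qed
  define u where "u q = (if q = q1 then x else y)" for q
  show False
  proof (rule breakers[OF p, of u])
    fix q assume "q \<in> C" "q \<noteq> p"
    then have "q = q1 \<or> q = q2" using C by auto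
    then show "u q \<in> D p \<and> u q \<in> fst q" using fixed xy C unfolding u_def by auto
  next
    fix q q' assume "q \<in> C" "q' \<in> C" "q \<noteq> p" "q' \<noteq> p" "u q = u q'"
    then show "q = q'" using xy C unfolding u_def by (auto split: if_splits)
  qed
qed


lemma conf2:
  assumes "c \<in> U" "r \<in> C" "s \<in> C" "\<And>q. q \<in> C \<Longrightarrow> c \<in> fst q \<Longrightarrow> q = r \<or> q = s"
  shows "c \<in> snd r \<longleftrightarrow> c \<notin> snd s"
proof -
  obtain p q where pq: "p \<in> C" "q \<in> C" "c \<in> fst p" "c \<in> fst q" "c \<in> snd p" "c \<notin> snd q"
    using conf assms(1) unfolding conflict_def by blast
  have "p = r \<or> p = s" "q = r \<or> q = s" using assms(4) pq by auto
  moreover have "p \<noteq> q" using pq by auto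
  ultimately show ?thesis using pq by auto
qed

lemma pigeon4: "\<exists>(u::bool) (v::bool). (u \<noteq> a1 \<or> v \<noteq> b1) \<and> (u \<noteq> a2 \<or> v \<noteq> b2) \<and> (u \<noteq> a3 \<or> v \<noteq> b3)"
  by (cases a1; cases b1; cases a2; cases b2; cases a3; cases b3) auto

lemma beta_nb:
  assumes k: "card C = 4" and p: "p \<in> C" and Dp: "D p = {b,c}" "b \<noteq> c"
  shows "\<exists>q\<in>C. q \<noteq> p \<and> (b \<in> D q \<or> c \<in> D q)"
proof (rule ccontr)
  assume nq: "\<not> ?thesis"
  obtain q1 q2 q3 where C: "C = {p, q1, q2, q3}" "p \<noteq> q1" "p \<noteq> q2" "p \<noteq> q3" "q1 \<noteq> q2" "q1 \<noteq> q3" "q2 \<noteq> q3"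
    using others3[OF k p] by metis
  have bcU: "b \<in> U" "c \<in> U" "b \<notin> fst p" "c \<notin> fst p" using Dp unfolding D_def by auto
  have fx: "b \<in> fst q \<and> c \<in> fst q" if "q \<in> C" "q \<noteq> p" for q
    using nq that bcU unfolding D_def by blast
  obtain u v where uv: "(u \<noteq> (b \<in> snd q1) \<or> v \<noteq> (c \<in> snd q1)) \<and> (u \<noteq> (b \<in> snd q2) \<or> v \<noteq> (c \<in> snd q2)) \<and>
      (u \<noteq> (b \<in> snd q3) \<or> v \<noteq> (c \<in> snd q3))"
    using pigeon4[of "b \<in> snd q1" "c \<in> snd q1" "b \<in> snd q2" "c \<in> snd q2" "b \<in> snd q3" "c \<in> snd q3"]
    by (elim exE) blast
  define X where "X = snd p \<union> (if u then {b} else {}) \<union> (if v then {c} else {})"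
  have X: "X \<in> cube U (fst p) (snd p)" using pw[OF p] bcU unfolding X_def cube_def by auto
  have Xb: "b \<in> X \<longleftrightarrow> u" and Xc: "c \<in> X \<longleftrightarrow> v" using pw[OF p] bcU Dp unfolding X_def by auto
  show False
  proof (rule break[OF p X])
    fix q assume q: "q \<in> C" "q \<noteq> p"
    have "q = q1 \<or> q = q2 \<or> q = q3" using q C by auto
    then have "(b \<in> X \<longleftrightarrow> b \<notin> snd q) \<or> (c \<in> X \<longleftrightarrow> c \<notin> snd q)" using uv Xb Xc by auto
    then show "blocks p q X" unfolding blocks_def using fx[OF q] bcU by blast
  qed
qed

lemma end_lemma:
  assumes k: "card C = 4" and p: "p \<in> C" and q: "q \<in> C" "q \<noteq> p"
    and Dp: "D p = {w, x}" "w \<noteq> x" and xq: "x \<in> D q" and wq: "w \<notin> D q"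
    and priv: "\<And>r. r \<in> C \<Longrightarrow> r \<noteq> p \<Longrightarrow> w \<notin> D r"
    and r: "r \<in> C" "r \<noteq> p" "r \<noteq> q"
  shows "w \<in> fst r \<and> (w \<in> snd r \<longleftrightarrow> w \<notin> snd q)"
proof -
  have wx: "w \<in> U" "x \<in> U" "w \<notin> fst p" "x \<notin> fst p" using Dp unfolding D_def by auto
  have wfix: "w \<in> fst l" if "l \<in> C" "l \<noteq> p" for l using priv[OF that] wx unfolding D_def by auto
  have xfix: "x \<in> fst l" if "l \<in> C" "l \<noteq> p" "l \<noteq> q" for l
  proof (rule ccontr)
    assume "x \<notin> fst l"
    moreover have "x \<notin> fst q" using xq unfolding D_def by auto
    ultimately show False using free2[OF wx(2) p q(1) that(1)] q(2) that wx(4) by metis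
  qed
  have cover: "\<exists>l\<in>C. l \<noteq> p \<and> l \<noteq> q \<and> (w \<in> snd l \<longleftrightarrow> w \<notin> snd q) \<and> (x \<in> snd l \<longleftrightarrow> t)" for t
  proof -
    define X where "X = snd p \<union> (if w \<in> snd q then {} else {w}) \<union> (if t then {x} else {})"
    have X: "X \<in> cube U (fst p) (snd p)" using pw[OF p] wx unfolding X_def cube_def by auto
    have Xw: "w \<in> X \<longleftrightarrow> w \<notin> snd q" and Xx: "x \<in> X \<longleftrightarrow> t" using pw[OF p] wx Dp unfolding X_def by auto
    obtain a where a: "a \<in> fst p" "flip X a \<in> GG U C" using ac p X unfolding ACov_def by blast
    then obtain l where l: "l \<in> C" "flip X a \<in> cube U (fst l) (snd l)" unfolding GG_def by auto
    note cv = cov[OF p X a(1) l]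
    have aw: "a \<noteq> w" "a \<noteq> x" using a(1) wx by auto
    have "l \<noteq> q"
    proof
      assume "l = q"
      then have "w \<in> X \<longleftrightarrow> w \<in> snd q" using cv(2)[of w] wfix[OF q] aw by simp
      then show False using Xw by simp
    qed
    moreover have "w \<in> snd l \<longleftrightarrow> w \<notin> snd q" using cv(2)[of w] wfix[OF l(1) cv(1)] aw Xw by simp
    moreover have "x \<in> snd l \<longleftrightarrow> t" using cv(2)[of x] xfix[OF l(1) cv(1) calculation(1)] aw Xx by simp
    ultimately show ?thesis using l(1) cv(1) by blast
  qed
  obtain l0 where l0: "l0 \<in> C" "l0 \<noteq> p" "l0 \<noteq> q" "w \<in> snd l0 \<longleftrightarrow> w \<notin> snd q" "x \<notin> snd l0"
    using cover[of False] by blast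
  obtain l1 where l1: "l1 \<in> C" "l1 \<noteq> p" "l1 \<noteq> q" "w \<in> snd l1 \<longleftrightarrow> w \<notin> snd q" "x \<in> snd l1"
    using cover[of True] by blast
  have "l0 \<noteq> l1" using l0 l1 by auto
  have "card (C - {p, q}) = 2" using k p q finC by (simp add: card_Diff_subset)
  then obtain m1 m2 where m: "C - {p, q} = {m1, m2}" "m1 \<noteq> m2" using card_2_iff by metis
  have "l0 \<in> {m1, m2}" "l1 \<in> {m1, m2}" "r \<in> {m1, m2}" using l0 l1 r m(1) by blast+
  then have "r = l0 \<or> r = l1" using \<open>l0 \<noteq> l1\<close> by auto
  then show ?thesis using l0 l1 wfix[OF r(1,2)] by auto
qed


lemma D_sub: "D p \<subseteq> U" unfolding D_def by auto

lemma inD: "x \<in> D p \<longleftrightarrow> x \<in> U \<and> x \<notin> fst p" unfolding D_def by auto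

lemma blocks1: "y \<in> fst q \<Longrightarrow> y \<notin> fst p \<Longrightarrow> (y \<in> X \<longleftrightarrow> y \<notin> snd q) \<Longrightarrow> blocks p q X"
  unfolding blocks_def by blast

lemma blocks2: "y1 \<noteq> y2 \<Longrightarrow> y1 \<in> fst p \<Longrightarrow> y1 \<in> fst q \<Longrightarrow> y2 \<in> fst p \<Longrightarrow> y2 \<in> fst q \<Longrightarrow>
   (y1 \<in> snd p \<longleftrightarrow> y1 \<notin> snd q) \<Longrightarrow> (y2 \<in> snd p \<longleftrightarrow> y2 \<notin> snd q) \<Longrightarrow> blocks p q X"
  unfolding blocks_def by blast

lemma sperD: "p \<in> C \<Longrightarrow> q \<in> C \<Longrightarrow> D p \<subseteq> D q \<Longrightarrow> p = q"
  using ach[of q p] S_eq[of p] S_eq[of q] by auto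

lemma Dcard:
  assumes k: "card C = 4" and p: "p \<in> C"
  shows "(\<exists>b. D p = {b}) \<or> (\<exists>b c. b \<noteq> c \<and> D p = {b,c})"
proof -
  obtain b where b: "b \<in> D p" using D_ne[OF p] by auto
  show ?thesis
  proof (cases "D p = {b}")
    case False
    then obtain c where c: "c \<in> D p" "c \<noteq> b" using b by auto
    show ?thesis
    proof (cases "D p = {b,c}")
      case False
      then obtain z where "z \<in> D p" "z \<noteq> b" "z \<noteq> c" using b c by auto
      then show ?thesis using dims4[OF k p b c(1)] c by blast
    qed (use c in blast)
  qed blast
qed

lemma free2': 
  assumes "c \<in> D r1" "c \<in> D r2" "c \<in> D r3" "r1 \<in> C" "r2 \<in> C" "r3 \<in> C" "r1 \<noteq> r2" "r1 \<noteq> r3" "r2 \<noteq> r3"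
  shows False
  using free2[of c r1 r2 r3] assms unfolding D_def by blast

lemma elimP5:
  assumes k: "card C = 4" and C: "C = {c1,c2,c3,c4}" "c1 \<noteq> c2" "c1 \<noteq> c3" "c1 \<noteq> c4" "c2 \<noteq> c3" "c2 \<noteq> c4" "c3 \<noteq> c4"
    and d: "a \<noteq> b" "a \<noteq> c" "a \<noteq> d" "a \<noteq> e" "b \<noteq> c" "b \<noteq> d" "b \<noteq> e" "c \<noteq> d" "c \<noteq> e" "d \<noteq> e"
    and D: "D c1 = {a,b}" "D c2 = {b,c}" "D c3 = {c,d}" "D c4 = {d,e}"
  shows False
proof -
  have inC: "c1 \<in> C" "c2 \<in> C" "c3 \<in> C" "c4 \<in> C" using C by auto
  have U: "a \<in> U" "b \<in> U" "c \<in> U" "d \<in> U" "e \<in> U" using D D_sub by blast+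
  have fs: "\<And>y p. p \<in> C \<Longrightarrow> y \<in> U \<Longrightarrow> y \<notin> D p \<Longrightarrow> y \<in> fst p" unfolding D_def by auto
  have e1: "a \<in> fst c3 \<and> (a \<in> snd c3 \<longleftrightarrow> a \<notin> snd c2)"
    by (rule end_lemma[OF k inC(1) inC(2) C(2)[symmetric] D(1) d(1)]) (use D d C in auto)
  have e2: "e \<in> fst c2 \<and> (e \<in> snd c2 \<longleftrightarrow> e \<notin> snd c3)"
    by (rule end_lemma[OF k inC(4) inC(3) C(7), of e d]) (use D d C in auto)
  define X where "X = snd c2 \<union> (if c \<in> snd c1 then {} else {c}) \<union> (if b \<in> snd c4 then {} else {b})"
  have X: "X \<in> cube U (fst c2) (snd c2)" using pw[OF inC(2)] U D(2) unfolding X_def cube_def D_def by auto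
  have bc2: "b \<notin> fst c2" "c \<notin> fst c2" using D(2) unfolding D_def by auto
  have Xb: "b \<in> X \<longleftrightarrow> b \<notin> snd c4" and Xc: "c \<in> X \<longleftrightarrow> c \<notin> snd c1"
    using pw[OF inC(2)] bc2 d unfolding X_def by auto
  show False
  proof (rule break[OF inC(2) X])
    fix q assume q: "q \<in> C" "q \<noteq> c2"
    then have "q = c1 \<or> q = c3 \<or> q = c4" using C by auto
    then show "blocks c2 q X"
    proof (elim disjE)
      assume "q = c1"
      have "c \<in> fst c1" using fs[OF inC(1) U(3)] D(1) d by auto
      then show ?thesis using blocks1[OF _ bc2(2) Xc] \<open>q = c1\<close> by simp
    next
      assume "q = c3"
      moreover have "a \<in> fst c2" "e \<in> fst c3" using fs[OF inC(2) U(1)] fs[OF inC(3) U(5)] D d by auto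
      ultimately show ?thesis using blocks2[OF d(4), of c2 c3] e1 e2 by blast
    next
      assume "q = c4"
      have "b \<in> fst c4" using fs[OF inC(4) U(2)] D(4) d by auto
      then show ?thesis using blocks1[OF _ bc2(1) Xb] \<open>q = c4\<close> by simp
    qed
  qed
qed

lemma elimP4:
  assumes k: "card C = 4" and C: "C = {c1,c2,c3,c4}" "c1 \<noteq> c2" "c1 \<noteq> c3" "c1 \<noteq> c4" "c2 \<noteq> c3" "c2 \<noteq> c4" "c3 \<noteq> c4"
    and d: "a \<noteq> b" "a \<noteq> c" "a \<noteq> d" "a \<noteq> e" "b \<noteq> c" "b \<noteq> d" "b \<noteq> e" "c \<noteq> d" "c \<noteq> e" "d \<noteq> e"
    and D: "D c1 = {a,b}" "D c2 = {b,c}" "D c3 = {c,d}" "D c4 = {e}"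
  shows False
proof -
  have inC: "c1 \<in> C" "c2 \<in> C" "c3 \<in> C" "c4 \<in> C" using C by auto
  have U: "a \<in> U" "b \<in> U" "c \<in> U" "d \<in> U" "e \<in> U" using D D_sub by blast+
  have fs: "\<And>y p. p \<in> C \<Longrightarrow> y \<in> U \<Longrightarrow> y \<notin> D p \<Longrightarrow> y \<in> fst p" unfolding D_def by auto
  have e1: "a \<in> fst c4 \<and> (a \<in> snd c4 \<longleftrightarrow> a \<notin> snd c2)"
    by (rule end_lemma[OF k inC(1) inC(2) C(2)[symmetric] D(1) d(1)]) (use D d C in auto)
  have e2: "d \<in> fst c4 \<and> (d \<in> snd c4 \<longleftrightarrow> d \<notin> snd c2)"
    by (rule end_lemma[OF k inC(3) inC(2) C(5), of d c]) (use D d C in auto)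
  define X where "X = snd c2 \<union> (if c \<in> snd c1 then {} else {c}) \<union> (if b \<in> snd c3 then {} else {b})"
  have X: "X \<in> cube U (fst c2) (snd c2)" using pw[OF inC(2)] U D(2) unfolding X_def cube_def D_def by auto
  have bc2: "b \<notin> fst c2" "c \<notin> fst c2" using D(2) unfolding D_def by auto
  have Xb: "b \<in> X \<longleftrightarrow> b \<notin> snd c3" and Xc: "c \<in> X \<longleftrightarrow> c \<notin> snd c1"
    using pw[OF inC(2)] bc2 d unfolding X_def by auto
  show False
  proof (rule break[OF inC(2) X])
    fix q assume q: "q \<in> C" "q \<noteq> c2"
    then have "q = c1 \<or> q = c3 \<or> q = c4" using C by auto
    then show "blocks c2 q X"
    proof (elim disjE)
      assume "q = c1"
      have "c \<in> fst c1" using fs[OF inC(1) U(3)] D(1) d by auto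
      then show ?thesis using blocks1[OF _ bc2(2) Xc] \<open>q = c1\<close> by simp
    next
      assume "q = c3"
      have "b \<in> fst c3" using fs[OF inC(3) U(2)] D(3) d by auto
      then show ?thesis using blocks1[OF _ bc2(1) Xb] \<open>q = c3\<close> by simp
    next
      assume "q = c4"
      moreover have "a \<in> fst c2" "d \<in> fst c2" using fs[OF inC(2)] U D d by auto
      ultimately show ?thesis using blocks2[OF d(3), of c2 c4] e1 e2 by blast
    qed
  qed
qed

lemma elimP3:
  assumes p: "p1 \<in> C" "p2 \<in> C" "p1 \<noteq> p2" and D: "D p1 = {x1,x2}" "D p2 = {x2,x3}"
    and d: "x1 \<noteq> x2" "x2 \<noteq> x3" "x1 \<noteq> x3"
    and pr1: "\<And>r. r \<in> C \<Longrightarrow> r \<noteq> p1 \<Longrightarrow> x1 \<notin> D r"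
    and pr3: "\<And>r. r \<in> C \<Longrightarrow> r \<noteq> p2 \<Longrightarrow> x3 \<notin> D r"
  shows False
proof -
  have x2U: "x2 \<in> U" using D D_sub by blast
  obtain p q where pq: "p \<in> C" "q \<in> C" "fst p - fst q = {x2}" using crit x2U unfolding critical_def by blast
  have x2q: "x2 \<in> D q" "x2 \<notin> D p" using pq x2U pw[OF pq(1)] unfolding D_def by auto
  have "q = p1 \<or> q = p2"
  proof (rule ccontr)
    assume "\<not> ?thesis"
    then show False using free2'[of x2 p1 p2 q] D x2q p pq by auto
  qed
  then show False
  proof
    assume "q = p1"
    have "x1 \<in> D p1" using D by simp
    then have x1: "x1 \<notin> fst q" "x1 \<in> U" using \<open>q = p1\<close> unfolding inD by auto
    have "x1 \<notin> fst p"
    proof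
      assume "x1 \<in> fst p" then have "x1 \<in> fst p - fst q" using x1(1) by simp
      then show False using pq(3) d(1) by simp
    qed
    then have "x1 \<in> D p" using x1 unfolding inD by simp
    moreover have "p \<noteq> p1" using x2q D by auto
    ultimately show False using pr1 pq(1) by blast
  next
    assume "q = p2"
    have "x3 \<in> D p2" using D by simp
    then have x3: "x3 \<notin> fst q" "x3 \<in> U" using \<open>q = p2\<close> unfolding inD by auto
    have "x3 \<notin> fst p"
    proof
      assume "x3 \<in> fst p" then have "x3 \<in> fst p - fst q" using x3(1) by simp
      then show False using pq(3) d(2) by simp
    qed
    then have "x3 \<in> D p" using x3 unfolding inD by simp
    moreover have "p \<noteq> p2" using x2q D by auto
    ultimately show False using pr3 pq(1) by blast
  qed
qed


lemma coverA1:
  assumes C: "C = {q1,q2,q3,q4}" and U: "U = {b1,b2,b3,b4}"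
    and d: "b1 \<noteq> b2" "b1 \<noteq> b3" "b1 \<noteq> b4" "b2 \<noteq> b3" "b2 \<noteq> b4" "b3 \<noteq> b4"
    and D: "D q1 = {b1}" "D q2 = {b2}" "D q3 = {b3}" "D q4 = {b4}"
  shows "((b1 \<in> snd q2 \<longleftrightarrow> v) \<and> \<not> ((b3 \<in> snd q1 \<longleftrightarrow> b3 \<notin> snd q2) \<and> (b4 \<in> snd q1 \<longleftrightarrow> b4 \<notin> snd q2))) \<or>
    ((b1 \<in> snd q3 \<longleftrightarrow> v) \<and> \<not> ((b2 \<in> snd q1 \<longleftrightarrow> b2 \<notin> snd q3) \<and> (b4 \<in> snd q1 \<longleftrightarrow> b4 \<notin> snd q3))) \<or>
    ((b1 \<in> snd q4 \<longleftrightarrow> v) \<and> \<not> ((b2 \<in> snd q1 \<longleftrightarrow> b2 \<notin> snd q4) \<and> (b3 \<in> snd q1 \<longleftrightarrow> b3 \<notin> snd q4)))"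
proof -
  have inC: "q1 \<in> C" "q2 \<in> C" "q3 \<in> C" "q4 \<in> C" using C by auto
  have S: "fst q1 = {b2,b3,b4}" "fst q2 = {b1,b3,b4}" "fst q3 = {b1,b2,b4}" "fst q4 = {b1,b2,b3}"
    using S_eq[OF inC(1)] S_eq[OF inC(2)] S_eq[OF inC(3)] S_eq[OF inC(4)] D U d by auto
  define X where "X = snd q1 \<union> (if v then {b1} else {})"
  have nf1: "b1 \<notin> fst q1" using S(1) d(1-3) by auto
  have nb1: "b1 \<notin> snd q1" using pw[OF inC(1)] nf1 by auto
  have X: "X \<in> cube U (fst q1) (snd q1)" using pw[OF inC(1)] nf1 U unfolding X_def cube_def by auto
  have Xm: "b1 \<in> X \<longleftrightarrow> v" "b2 \<in> X \<longleftrightarrow> b2 \<in> snd q1" "b3 \<in> X \<longleftrightarrow> b3 \<in> snd q1" "b4 \<in> X \<longleftrightarrow> b4 \<in> snd q1"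
    unfolding X_def using nb1 d(1-3) by auto
  obtain a where a: "a \<in> fst q1" "flip X a \<in> GG U C" using ac inC(1) X unfolding ACov_def by blast
  then obtain l where l: "l \<in> C" "flip X a \<in> cube U (fst l) (snd l)" unfolding GG_def by auto
  note cv = cov[OF inC(1) X a(1) l]
  have a1: "a \<noteq> b1" using a(1) S d by auto
  have "l = q2 \<or> l = q3 \<or> l = q4" using l(1) cv(1) C by auto
  then show ?thesis
  proof (elim disjE)
    assume "l = q2"
    then have "b1 \<in> X \<longleftrightarrow> b1 \<in> snd q2" "b3 \<noteq> a \<Longrightarrow> (b3 \<in> X \<longleftrightarrow> b3 \<in> snd q2)"
      "b4 \<noteq> a \<Longrightarrow> (b4 \<in> X \<longleftrightarrow> b4 \<in> snd q2)" using cv(2) S a1 by auto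
    then show ?thesis using Xm d by blast
  next
    assume "l = q3"
    then have "b1 \<in> X \<longleftrightarrow> b1 \<in> snd q3" "b2 \<noteq> a \<Longrightarrow> (b2 \<in> X \<longleftrightarrow> b2 \<in> snd q3)"
      "b4 \<noteq> a \<Longrightarrow> (b4 \<in> X \<longleftrightarrow> b4 \<in> snd q3)" using cv(2) S a1 by auto
    then show ?thesis using Xm d by blast
  next
    assume "l = q4"
    then have "b1 \<in> X \<longleftrightarrow> b1 \<in> snd q4" "b2 \<noteq> a \<Longrightarrow> (b2 \<in> X \<longleftrightarrow> b2 \<in> snd q4)"
      "b3 \<noteq> a \<Longrightarrow> (b3 \<in> X \<longleftrightarrow> b3 \<in> snd q4)" using cv(2) S a1 by auto
    then show ?thesis using Xm d by blast
  qed
qed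

lemma conf3:
  assumes "c \<in> U" "\<And>q. q \<in> C \<Longrightarrow> c \<in> fst q \<Longrightarrow> q = r \<or> q = s \<or> q = t"
  shows "\<not> ((c \<in> snd r \<longleftrightarrow> c \<in> snd s) \<and> (c \<in> snd s \<longleftrightarrow> c \<in> snd t))"
proof
  assume h: "(c \<in> snd r \<longleftrightarrow> c \<in> snd s) \<and> (c \<in> snd s \<longleftrightarrow> c \<in> snd t)"
  obtain p q where pq: "p \<in> C" "q \<in> C" "c \<in> fst p" "c \<in> fst q" "c \<in> snd p" "c \<notin> snd q"
    using conf assms(1) unfolding conflict_def by blast
  have "p = r \<or> p = s \<or> p = t" "q = r \<or> q = s \<or> q = t" using assms(2) pq by auto
  then show False using h pq by auto
qed

definition cwc where
  "cwc p q r s bp bq br bs \<longleftrightarrow> (br \<in> snd p \<longleftrightarrow> br \<notin> snd q) \<and> (bs \<in> snd p \<longleftrightarrow> bs \<notin> snd q) \<and>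
    \<not> ((bp \<in> snd r \<longleftrightarrow> bp \<in> snd q) \<and> (bq \<in> snd r \<longleftrightarrow> bq \<in> snd p) \<and> (bs \<in> snd r \<longleftrightarrow> bs \<in> snd q)) \<and>
    \<not> ((bp \<in> snd s \<longleftrightarrow> bp \<in> snd q) \<and> (bq \<in> snd s \<longleftrightarrow> bq \<in> snd p) \<and> (br \<in> snd s \<longleftrightarrow> br \<in> snd p)) \<and>
    \<not> ((bp \<in> snd r \<longleftrightarrow> bp \<in> snd q) \<and> (bq \<in> snd r \<longleftrightarrow> bq \<in> snd p) \<and> (bs \<in> snd r \<longleftrightarrow> bs \<in> snd p)) \<and>
    \<not> ((bp \<in> snd s \<longleftrightarrow> bp \<in> snd q) \<and> (bq \<in> snd s \<longleftrightarrow> bq \<in> snd p) \<and> (br \<in> snd s \<longleftrightarrow> br \<in> snd q))"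

lemma cw_apply:
  assumes C: "C = {p,q,r,s}" and U: "U = {bp,bq,br,bs}"
    and d: "bp \<noteq> bq" "bp \<noteq> br" "bp \<noteq> bs" "bq \<noteq> br" "bq \<noteq> bs" "br \<noteq> bs"
    and D: "D p = {bp}" "D q = {bq}" "D r = {br}" "D s = {bs}"
    and cw: "cwc p q r s bp bq br bs"
  shows "\<not> s_extremal (FF U C)"
proof -
  have inC: "p \<in> C" "q \<in> C" "r \<in> C" "s \<in> C" using C by auto
  have S: "fst p = {bq,br,bs}" "fst q = {bp,br,bs}" "fst r = {bp,bq,bs}" "fst s = {bp,bq,br}"
    using S_eq[OF inC(1)] S_eq[OF inC(2)] S_eq[OF inC(3)] S_eq[OF inC(4)] D U d by auto
  show ?thesis
    by (rule shapeCw[OF d U C S]) (use pw[OF inC(1)] pw[OF inC(2)] pw[OF inC(3)] pw[OF inC(4)] cw in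
      \<open>auto simp: cwc_def\<close>)
qed

lemma shapeC_main:
  assumes C: "C = {q1,q2,q3,q4}" and U: "U = {b1,b2,b3,b4}"
    and d: "b1 \<noteq> b2" "b1 \<noteq> b3" "b1 \<noteq> b4" "b2 \<noteq> b3" "b2 \<noteq> b4" "b3 \<noteq> b4"
    and D: "D q1 = {b1}" "D q2 = {b2}" "D q3 = {b3}" "D q4 = {b4}"
  shows "\<not> s_extremal (FF U C)"
proof -
  have inC: "q1 \<in> C" "q2 \<in> C" "q3 \<in> C" "q4 \<in> C" using C by auto
  have S: "fst q1 = {b2,b3,b4}" "fst q2 = {b1,b3,b4}" "fst q3 = {b1,b2,b4}" "fst q4 = {b1,b2,b3}"
    using S_eq[OF inC(1)] S_eq[OF inC(2)] S_eq[OF inC(3)] S_eq[OF inC(4)] D U d by auto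
  have C2: "C = {q2,q1,q3,q4}" "C = {q3,q1,q2,q4}" "C = {q4,q1,q2,q3}" using C by auto
  have U2: "U = {b2,b1,b3,b4}" "U = {b3,b1,b2,b4}" "U = {b4,b1,b2,b3}" using U by auto
  note c1 = coverA1[OF C U d D]
  note c2 = coverA1[OF C2(1) U2(1) d(1)[symmetric] d(4,5) d(2,3,6) D(2,1,3,4)]
  note c3 = coverA1[OF C2(2) U2(2) d(2)[symmetric] d(4)[symmetric] d(6) d(1,3,5) D(3,1,2,4)]
  note c4 = coverA1[OF C2(3) U2(3) d(3)[symmetric] d(5)[symmetric] d(6)[symmetric] d(1,2,4) D(4,1,2,3)]
  have fix1: "\<And>q. q \<in> C \<Longrightarrow> b1 \<in> fst q \<Longrightarrow> q = q2 \<or> q = q3 \<or> q = q4" using C S d by auto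
  have fix2: "\<And>q. q \<in> C \<Longrightarrow> b2 \<in> fst q \<Longrightarrow> q = q1 \<or> q = q3 \<or> q = q4" using C S d by auto
  have fix3: "\<And>q. q \<in> C \<Longrightarrow> b3 \<in> fst q \<Longrightarrow> q = q1 \<or> q = q2 \<or> q = q4" using C S d by auto
  have fix4: "\<And>q. q \<in> C \<Longrightarrow> b4 \<in> fst q \<Longrightarrow> q = q1 \<or> q = q2 \<or> q = q3" using C S d by auto
  have bU: "b1 \<in> U" "b2 \<in> U" "b3 \<in> U" "b4 \<in> U" using U by auto
  note f1 = conf3[OF bU(1) fix1] and f2 = conf3[OF bU(2) fix2] and f3 = conf3[OF bU(3) fix3] and f4 = conf3[OF bU(4) fix4]
  have "cwc q1 q2 q3 q4 b1 b2 b3 b4 \<or> cwc q1 q3 q2 q4 b1 b3 b2 b4 \<or> cwc q1 q4 q2 q3 b1 b4 b2 b3 \<or>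
        cwc q2 q3 q1 q4 b2 b3 b1 b4 \<or> cwc q2 q4 q1 q3 b2 b4 b1 b3 \<or> cwc q3 q4 q1 q2 b3 b4 b1 b2"
    unfolding cwc_def using c1[of True] c1[of False] c2[of True] c2[of False] c3[of True] c3[of False]
      c4[of True] c4[of False] f1 f2 f3 f4 by argo
  then show ?thesis
  proof (elim disjE)
    assume "cwc q1 q2 q3 q4 b1 b2 b3 b4"
    then show ?thesis using cw_apply[OF C U d D] by blast
  next
    assume "cwc q1 q3 q2 q4 b1 b3 b2 b4"
    moreover have "C = {q1,q3,q2,q4}" "U = {b1,b3,b2,b4}" using C U by auto
    ultimately show ?thesis using cw_apply d D by blast
  next
    assume "cwc q1 q4 q2 q3 b1 b4 b2 b3"
    moreover have "C = {q1,q4,q2,q3}" "U = {b1,b4,b2,b3}" using C U by auto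
    ultimately show ?thesis using cw_apply d D by blast
  next
    assume "cwc q2 q3 q1 q4 b2 b3 b1 b4"
    moreover have "C = {q2,q3,q1,q4}" "U = {b2,b3,b1,b4}" using C U by auto
    ultimately show ?thesis using cw_apply d D by blast
  next
    assume "cwc q2 q4 q1 q3 b2 b4 b1 b3"
    moreover have "C = {q2,q4,q1,q3}" "U = {b2,b4,b1,b3}" using C U by auto
    ultimately show ?thesis using cw_apply d D by blast
  next
    assume "cwc q3 q4 q1 q2 b3 b4 b1 b2"
    moreover have "C = {q3,q4,q1,q2}" "U = {b3,b4,b1,b2}" using C U by auto
    ultimately show ?thesis using cw_apply d D by blast
  qed
qed


lemma UD_in: assumes "c \<in> U" "C = {p1,p2,p3,p4}" shows "c \<in> D p1 \<or> c \<in> D p2 \<or> c \<in> D p3 \<or> c \<in> D p4"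
  using UD[OF assms(1)] assms(2) by auto

lemma D2_orient: assumes "D p = {b,c}" "x \<in> D p" obtains y where "D p = {x,y}" "y \<noteq> x \<or> b = c"
  using assms by (metis insertE insert_commute singletonD)

lemma notD_single:
  assumes k: "card C = 4" and p: "p \<in> C" and q: "q \<in> C" "q \<noteq> p" and x: "x \<in> D p" "D q = {x}"
  shows False
  using sperD[OF q(1) p] x q(2) by auto

lemma alpha_if_disjoint:
  assumes k: "card C = 4" and p: "p \<in> C" and dis: "\<And>q z. q \<in> C \<Longrightarrow> q \<noteq> p \<Longrightarrow> z \<in> D p \<Longrightarrow> z \<notin> D q"
  obtains e where "D p = {e}"
proof -
  have "\<not> (\<exists>b c. b \<noteq> c \<and> D p = {b,c})"
  proof
    assume "\<exists>b c. b \<noteq> c \<and> D p = {b,c}"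
    then obtain b c where "b \<noteq> c" "D p = {b,c}" by blast
    then show False using beta_nb[OF k p] dis by blast
  qed
  then show ?thesis using Dcard[OF k p] that by blast
qed

lemma caseA:
  assumes k: "card C = 4" and C: "C = {p1,p2,p3,p4}" and dp: "p1 \<noteq> p2" "p1 \<noteq> p3" "p1 \<noteq> p4" "p2 \<noteq> p3" "p2 \<noteq> p4" "p3 \<noteq> p4"
    and D1: "D p1 = {x1,x2}" and D2: "D p2 = {x2,x3}" and d: "x1 \<noteq> x2" "x2 \<noteq> x3" "x1 \<noteq> x3"
    and x13: "x1 \<in> D p3"
  shows "\<not> s_extremal (FF U C)"
proof -
  have inC: "p1 \<in> C" "p2 \<in> C" "p3 \<in> C" "p4 \<in> C" using C by auto
  have x2n: "x2 \<notin> D p3" "x2 \<notin> D p4" using free2'[of x2 p1 p2 p3] free2'[of x2 p1 p2 p4] D1 D2 inC dp by auto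
  have x1n: "x1 \<notin> D p4" "x1 \<notin> D p2" using free2'[of x1 p1 p3 p4] D1 D2 x13 inC dp d by auto
  obtain y where D3: "D p3 = {x1,y}" "y \<noteq> x1"
  proof -
    have "\<not> (D p3 = {x1})" using sperD[OF inC(3) inC(1)] D1 dp(2) by auto
    moreover have "\<not> (\<exists>b. D p3 = {b} \<and> b \<noteq> x1)" using x13 by auto
    ultimately obtain b c where "b \<noteq> c" "D p3 = {b,c}" using Dcard[OF k inC(3)] by blast
    then show ?thesis using that x13 by (metis D2_orient)
  qed
  have yx2: "y \<noteq> x2" using x2n D3 by auto
  have UU: "\<And>c. c \<in> U \<Longrightarrow> c \<in> D p1 \<or> c \<in> D p2 \<or> c \<in> D p3 \<or> c \<in> D p4" using UD_in C by blast
  show ?thesis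
  proof (cases "y = x3")
    case True
    have x3n: "x3 \<notin> D p4" using free2'[of x3 p2 p3 p4] D2 D3 True inC dp by auto
    obtain d0 where D4: "D p4 = {d0}"
      by (rule alpha_if_disjoint[OF k inC(4)]) (use C D1 D2 D3 True x1n x2n x3n in auto)
    have d0: "d0 \<noteq> x1" "d0 \<noteq> x2" "d0 \<noteq> x3" using x1n x2n x3n D4 by auto
    have U: "U = {x1,x2,x3,d0}"
    proof
      show "U \<subseteq> {x1,x2,x3,d0}" using UU D1 D2 D3 D4 True by blast
      show "{x1,x2,x3,d0} \<subseteq> U" using D_sub D1 D2 D4 by blast
    qed
    have S: "fst p1 = {x3,d0}" "fst p2 = {x1,d0}" "fst p3 = {x2,d0}" "fst p4 = {x1,x2,x3}"
      using S_eq[OF inC(1)] S_eq[OF inC(2)] S_eq[OF inC(3)] S_eq[OF inC(4)] D1 D2 D3 D4 U True d d0 by auto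
    have H: "snd p1 \<subseteq> fst p1" "snd p2 \<subseteq> fst p2" "snd p3 \<subseteq> fst p3" "snd p4 \<subseteq> fst p4"
      using pw inC by auto
    have Ux: "x1 \<in> U" "x2 \<in> U" "x3 \<in> U" "d0 \<in> U" using U by auto
    have c1: "x1 \<in> snd p2 \<longleftrightarrow> x1 \<notin> snd p4" by (rule conf2[OF Ux(1) inC(2) inC(4)]) (use C S d d0 in auto)
    have c2: "x2 \<in> snd p3 \<longleftrightarrow> x2 \<notin> snd p4" by (rule conf2[OF Ux(2) inC(3) inC(4)]) (use C S d d0 in auto)
    have c3: "x3 \<in> snd p1 \<longleftrightarrow> x3 \<notin> snd p4" by (rule conf2[OF Ux(3) inC(1) inC(4)]) (use C S d d0 in auto)
    have c4: "\<not> ((d0 \<in> snd p1 \<longleftrightarrow> d0 \<in> snd p2) \<and> (d0 \<in> snd p2 \<longleftrightarrow> d0 \<in> snd p3))"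
      by (rule conf3[OF Ux(4)]) (use C S d d0 in auto)
    have dd: "x1 \<noteq> x2" "x1 \<noteq> x3" "x1 \<noteq> d0" "x2 \<noteq> x3" "x2 \<noteq> d0" "x3 \<noteq> d0" using d d0 by auto
    consider "d0 \<in> snd p2 \<longleftrightarrow> d0 \<notin> snd p3" | "d0 \<in> snd p1 \<longleftrightarrow> d0 \<notin> snd p3" | "d0 \<in> snd p1 \<longleftrightarrow> d0 \<notin> snd p2"
      using c4 by blast
    then show ?thesis
    proof cases
      case 1
      show ?thesis
        by (rule shapeA[of x1 x2 x3 d0 U C p1 p2 p3 p4]) (use dd U C S H c1 c2 c3 1 in auto)
    next
      case 2
      have "U = {x3,x2,x1,d0}" "C = {p2,p1,p3,p4}" using U C by auto
      then show ?thesis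
        by (rule shapeA[of x3 x2 x1 d0 U C p2 p1 p3 p4, rotated 6]) (use dd S H c1 c2 c3 2 in auto)
    next
      case 3
      have "U = {x3,x1,x2,d0}" "C = {p3,p1,p2,p4}" using U C by auto
      then show ?thesis
        by (rule shapeA[of x3 x1 x2 d0 U C p3 p1 p2 p4, rotated 6]) (use dd S H c1 c2 c3 3 in auto)
    qed
  next
    case False
    note y3 = False
    show ?thesis
    proof (cases "x3 \<in> D p4")
      case True
      obtain t where D4: "D p4 = {x3,t}" "t \<noteq> x3"
      proof -
        have "\<not> (D p4 = {x3})" using sperD[OF inC(4) inC(2)] D2 dp(5) by auto
        moreover have "\<not> (\<exists>b. D p4 = {b} \<and> b \<noteq> x3)" using True by auto
        ultimately obtain b c where "b \<noteq> c" "D p4 = {b,c}" using Dcard[OF k inC(4)] by blast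
        then show ?thesis using that True by (metis D2_orient)
      qed
      have t: "t \<noteq> x1" "t \<noteq> x2" using x1n x2n D4 by auto
      show ?thesis
      proof (cases "t = y")
        case True
        have U: "U = {x1,x2,x3,y}"
        proof
          show "U \<subseteq> {x1,x2,x3,y}" using UU D1 D2 D3 D4 True by blast
          show "{x1,x2,x3,y} \<subseteq> U" using D_sub D1 D2 D3 by blast
        qed
        have dd: "x1 \<noteq> x2" "x1 \<noteq> x3" "x1 \<noteq> y" "x2 \<noteq> x3" "x2 \<noteq> y" "x3 \<noteq> y" using d D3 yx2 y3 by auto
        have S: "fst p1 = {x3,y}" "fst p2 = {y,x1}" "fst p4 = {x1,x2}" "fst p3 = {x2,x3}"
          using S_eq[OF inC(1)] S_eq[OF inC(2)] S_eq[OF inC(3)] S_eq[OF inC(4)] D1 D2 D3 D4 U True dd by auto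
        have H: "snd p1 \<subseteq> fst p1" "snd p2 \<subseteq> fst p2" "snd p4 \<subseteq> fst p4" "snd p3 \<subseteq> fst p3"
          using pw inC by auto
        have Ux: "x1 \<in> U" "x2 \<in> U" "x3 \<in> U" "y \<in> U" using U by auto
        have cw: "x1 \<in> snd p2 \<longleftrightarrow> x1 \<notin> snd p4" by (rule conf2[OF Ux(1) inC(2) inC(4)]) (use C S dd in auto)
        have cx: "x2 \<in> snd p4 \<longleftrightarrow> x2 \<notin> snd p3" by (rule conf2[OF Ux(2) inC(4) inC(3)]) (use C S dd in auto)
        have cy: "x3 \<in> snd p3 \<longleftrightarrow> x3 \<notin> snd p1" by (rule conf2[OF Ux(3) inC(3) inC(1)]) (use C S dd in auto)
        have cz: "y \<in> snd p1 \<longleftrightarrow> y \<notin> snd p2" by (rule conf2[OF Ux(4) inC(1) inC(2)]) (use C S dd in auto)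
        have C': "C = {p1,p2,p4,p3}" using C by auto
        show ?thesis by (rule shapeB[OF dd U C' S H cw cx cy cz])
      next
        case False
        have "False"
          by (rule elimP5[OF k, of p4 p2 p1 p3 t x3 x2 x1 y]) (use C dp d D1 D2 D3 D4 t False y3 yx2 in auto)
        then show ?thesis by simp
      qed
    next
      case False
      note x3n = False
      show ?thesis
      proof (cases "y \<in> D p4")
        case True
        obtain t where D4: "D p4 = {y,t}" "t \<noteq> y"
        proof -
          have "\<not> (D p4 = {y})" using sperD[OF inC(4) inC(3)] D3 dp(6) by auto
          moreover have "\<not> (\<exists>b. D p4 = {b} \<and> b \<noteq> y)" using True by auto
          ultimately obtain b c where "b \<noteq> c" "D p4 = {b,c}" using Dcard[OF k inC(4)] by blast
          then show ?thesis using that True by (metis D2_orient)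
        qed
        have t: "t \<noteq> x1" "t \<noteq> x2" "t \<noteq> x3" using x1n x2n x3n D4 by auto
        have "False"
          by (rule elimP5[OF k, of p2 p1 p3 p4 x3 x2 x1 y t]) (use C dp d D1 D2 D3 D4 t y3 yx2 in auto)
        then show ?thesis by simp
      next
        case False
        obtain e where D4: "D p4 = {e}"
          by (rule alpha_if_disjoint[OF k inC(4)]) (use C D1 D2 D3 x1n x2n x3n False in auto)
        have e: "e \<noteq> x1" "e \<noteq> x2" "e \<noteq> x3" "e \<noteq> y" using x1n x2n x3n False D4 by auto
        have "False"
          by (rule elimP4[OF k, of p2 p1 p3 p4 x3 x2 x1 y e]) (use C dp d D1 D2 D3 D4 e y3 yx2 in auto)
        then show ?thesis by simp
      qed
    qed
  qed
qed


lemma caseB1: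
  assumes k: "card C = 4" and C: "C = {p1,p2,p3,p4}" and dp: "p1 \<noteq> p2" "p1 \<noteq> p3" "p1 \<noteq> p4" "p2 \<noteq> p3" "p2 \<noteq> p4" "p3 \<noteq> p4"
    and D1: "D p1 = {x1,x2}" and D2: "D p2 = {x2,x3}" and d: "x1 \<noteq> x2" "x2 \<noteq> x3" "x1 \<noteq> x3"
    and x1n: "x1 \<notin> D p3" "x1 \<notin> D p4" and x33: "x3 \<in> D p3"
  shows False
proof -
  have inC: "p1 \<in> C" "p2 \<in> C" "p3 \<in> C" "p4 \<in> C" using C by auto
  have x2n: "x2 \<notin> D p3" "x2 \<notin> D p4" using free2'[of x2 p1 p2 p3] free2'[of x2 p1 p2 p4] D1 D2 inC dp by auto
  obtain y where D3: "D p3 = {x3,y}" "y \<noteq> x3"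
  proof -
    have "\<not> (D p3 = {x3})" using sperD[OF inC(3) inC(2)] D2 dp(4) by auto
    moreover have "\<not> (\<exists>b. D p3 = {b} \<and> b \<noteq> x3)" using x33 by auto
    ultimately obtain b c where "b \<noteq> c" "D p3 = {b,c}" using Dcard[OF k inC(3)] by blast
    then show ?thesis using that x33 by (metis D2_orient)
  qed
  have y: "y \<noteq> x2" "y \<noteq> x1" using x2n x1n D3 by auto
  have x3n: "x3 \<notin> D p4" using free2'[of x3 p2 p3 p4] D2 D3 inC dp by auto
  show False
  proof (cases "y \<in> D p4")
    case True
    obtain t where D4: "D p4 = {y,t}" "t \<noteq> y"
    proof -
      have "\<not> (D p4 = {y})" using sperD[OF inC(4) inC(3)] D3 dp(6) by auto
      moreover have "\<not> (\<exists>b. D p4 = {b} \<and> b \<noteq> y)" using True by auto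
      ultimately obtain b c where "b \<noteq> c" "D p4 = {b,c}" using Dcard[OF k inC(4)] by blast
      then show ?thesis using that True by (metis D2_orient)
    qed
    have t: "t \<noteq> x1" "t \<noteq> x2" "t \<noteq> x3" using x1n x2n x3n D4 by auto
    show False
      by (rule elimP5[OF k, of p1 p2 p3 p4 x1 x2 x3 y t]) (use C dp d D1 D2 D3 D4 t y in auto)
  next
    case False
    obtain e where D4: "D p4 = {e}"
      by (rule alpha_if_disjoint[OF k inC(4)]) (use C D1 D2 D3 x1n x2n x3n False in auto)
    have e: "e \<noteq> x1" "e \<noteq> x2" "e \<noteq> x3" "e \<noteq> y" using x1n x2n x3n False D4 by auto
    show False
      by (rule elimP4[OF k, of p1 p2 p3 p4 x1 x2 x3 y e]) (use C dp d D1 D2 D3 D4 e y in auto)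
  qed
qed

lemma beta_struct:
  assumes k: "card C = 4" and p: "p1 \<in> C" "p2 \<in> C" "p1 \<noteq> p2"
    and D1: "D p1 = {x1,x2}" and D2: "D p2 = {x2,x3}" and d: "x1 \<noteq> x2" "x2 \<noteq> x3" "x1 \<noteq> x3"
  shows "\<not> s_extremal (FF U C)"
proof -
  have "card (C - {p1,p2}) = 2" using k p finC by (simp add: card_Diff_subset)
  then obtain p3 p4 where m: "C - {p1, p2} = {p3, p4}" "p3 \<noteq> p4" using card_2_iff by metis
  have C: "C = {p1,p2,p3,p4}" using m p by auto
  have dp: "p1 \<noteq> p2" "p1 \<noteq> p3" "p1 \<noteq> p4" "p2 \<noteq> p3" "p2 \<noteq> p4" "p3 \<noteq> p4" using m p by auto
  have C': "C = {p1,p2,p4,p3}" using C by auto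
  have dp': "p1 \<noteq> p2" "p1 \<noteq> p4" "p1 \<noteq> p3" "p2 \<noteq> p4" "p2 \<noteq> p3" "p4 \<noteq> p3" using dp by auto
  show ?thesis
  proof (cases "x1 \<in> D p3")
    case True then show ?thesis using caseA[OF k C dp D1 D2 d] by blast
  next
    case n3: False
    show ?thesis
    proof (cases "x1 \<in> D p4")
      case True then show ?thesis using caseA[OF k C' dp' D1 D2 d] by blast
    next
      case n4: False
      show ?thesis
      proof (cases "x3 \<in> D p3")
        case True then show ?thesis using caseB1[OF k C dp D1 D2 d n3 n4] by blast
      next
        case m3: False
        show ?thesis
        proof (cases "x3 \<in> D p4")
          case True then show ?thesis using caseB1[OF k C' dp' D1 D2 d n4 n3] by blast
        next
          case m4: False
          have "False"
          proof (rule elimP3[OF p D1 D2 d])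
            fix r assume "r \<in> C" "r \<noteq> p1"
            then show "x1 \<notin> D r" using C n3 n4 D2 d by auto
          next
            fix r assume "r \<in> C" "r \<noteq> p2"
            then show "x3 \<notin> D r" using C m3 m4 D1 d by auto
          qed
          then show ?thesis by simp
        qed
      qed
    qed
  qed
qed

lemma k3case:
  assumes k: "card C = 3"
  shows "\<not> s_extremal (FF U C)"
proof -
  obtain p1 p2 p3 where C: "C = {p1,p2,p3}" "p1 \<noteq> p2" "p2 \<noteq> p3" "p1 \<noteq> p3" using k card_3_iff by metis
  have inC: "p1 \<in> C" "p2 \<in> C" "p3 \<in> C" using C by auto
  have single: "\<exists>b. D p = {b}" if pC: "p \<in> C" for p
  proof -
    obtain b where "b \<in> D p" using D_ne[OF pC] by auto
    moreover have "\<And>c. c \<in> D p \<Longrightarrow> c = b" using dims3[OF k pC] calculation by blast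
    ultimately show ?thesis by blast
  qed
  obtain b1 b2 b3 where D: "D p1 = {b1}" "D p2 = {b2}" "D p3 = {b3}" using single inC by metis
  have d: "b1 \<noteq> b2" "b1 \<noteq> b3" "b2 \<noteq> b3" using sperD inC D C by (metis subset_refl)+
  have U: "U = {b1,b2,b3}"
  proof
    show "U \<subseteq> {b1,b2,b3}" using UD C D by blast
    show "{b1,b2,b3} \<subseteq> U" using D_sub D by blast
  qed
  have S: "fst p1 = {b2,b3}" "fst p2 = {b1,b3}" "fst p3 = {b1,b2}"
    using S_eq[OF inC(1)] S_eq[OF inC(2)] S_eq[OF inC(3)] D U d by auto
  have H: "snd p1 \<subseteq> fst p1" "snd p2 \<subseteq> fst p2" "snd p3 \<subseteq> fst p3" using pw inC by auto
  have Ub: "b1 \<in> U" "b2 \<in> U" "b3 \<in> U" using U by auto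
  have c1: "b1 \<in> snd p2 \<longleftrightarrow> b1 \<notin> snd p3" by (rule conf2[OF Ub(1) inC(2) inC(3)]) (use C S d in auto)
  have c2: "b2 \<in> snd p1 \<longleftrightarrow> b2 \<notin> snd p3" by (rule conf2[OF Ub(2) inC(1) inC(3)]) (use C S d in auto)
  have c3: "b3 \<in> snd p1 \<longleftrightarrow> b3 \<notin> snd p2" by (rule conf2[OF Ub(3) inC(1) inC(2)]) (use C S d in auto)
  show ?thesis by (rule shapeH[OF d U C(1) S H c1 c2 c3])
qed

lemma k4alpha:
  assumes k: "card C = 4" and al: "\<forall>p\<in>C. \<exists>b. D p = {b}"
  shows "\<not> s_extremal (FF U C)"
proof -
  obtain q1 q2 q3 q4 where C: "C = {q1,q2,q3,q4}" "q1 \<noteq> q2" "q1 \<noteq> q3" "q1 \<noteq> q4" "q2 \<noteq> q3" "q2 \<noteq> q4" "q3 \<noteq> q4"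
    using card4_obtain[OF k] by metis
  have inC: "q1 \<in> C" "q2 \<in> C" "q3 \<in> C" "q4 \<in> C" using C by auto
  obtain b1 b2 b3 b4 where D: "D q1 = {b1}" "D q2 = {b2}" "D q3 = {b3}" "D q4 = {b4}" using al inC by metis
  have d: "b1 \<noteq> b2" "b1 \<noteq> b3" "b1 \<noteq> b4" "b2 \<noteq> b3" "b2 \<noteq> b4" "b3 \<noteq> b4"
    using sperD inC D C by (metis subset_refl)+
  have U: "U = {b1,b2,b3,b4}"
  proof
    show "U \<subseteq> {b1,b2,b3,b4}" using UD C D by blast
    show "{b1,b2,b3,b4} \<subseteq> U" using D_sub D by blast
  qed
  show ?thesis by (rule shapeC_main[OF C(1) U d D])
qed

lemma nonext: "\<not> s_extremal (FF U C)"
proof -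
  have "card C = 3 \<or> card C = 4" using card_ge3 k4 by linarith
  then show ?thesis
  proof
    assume "card C = 3" then show ?thesis by (rule k3case)
  next
    assume k: "card C = 4"
    show ?thesis
    proof (cases "\<forall>p\<in>C. \<exists>b. D p = {b}")
      case True then show ?thesis using k4alpha[OF k] by blast
    next
      case False
      then obtain p where p: "p \<in> C" and ns: "\<not> (\<exists>b. D p = {b})" by blast
      then obtain b c where bc: "b \<noteq> c" "D p = {b,c}" using Dcard[OF k p] by blast
      obtain q where q: "q \<in> C" "q \<noteq> p" "b \<in> D q \<or> c \<in> D q" using beta_nb[OF k p bc(2,1)] by blast
      have nsq: "\<not> (\<exists>z. D q = {z})"
      proof
        assume "\<exists>z. D q = {z}"
        then obtain z where z: "D q = {z}" by blast
        then have "D q \<subseteq> D p" using q(3) bc by auto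
        then show False using sperD[OF q(1) p] q(2) by simp
      qed
      then obtain u v where uv: "u \<noteq> v" "D q = {u,v}" using Dcard[OF k q(1)] by blast
      have neq: "D q \<noteq> D p" using sperD[OF q(1) p] q(2) by auto
      from q(3) show ?thesis
      proof
        assume "c \<in> D q"
        then obtain x3 where x3: "D q = {c,x3}" "x3 \<noteq> c" using uv by (metis D2_orient)
        have "x3 \<noteq> b" using x3 bc neq by auto
        then show ?thesis using beta_struct[OF k p q(1) q(2)[symmetric] bc(2) x3(1) bc(1) x3(2)[symmetric]] by blast
      next
        assume "b \<in> D q"
        then obtain x3 where x3: "D q = {b,x3}" "x3 \<noteq> b" using uv by (metis D2_orient)
        have "x3 \<noteq> c" using x3 bc neq by auto
        moreover have "D p = {c,b}" using bc by auto
        ultimately show ?thesis using beta_struct[OF k p q(1) q(2)[symmetric], of c b x3] bc(1) x3 by auto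
      qed
    qed
  qed
qed

end

lemma base_final:
  assumes "wfc U C" "C \<noteq> {}" "card C \<le> 4" "ACov U C"
    "\<forall>c\<in>U. critical C c" "\<forall>c\<in>U. conflict C c"
  shows "\<not> s_extremal (FF U C)"
proof -
  interpret B U C using assms by unfold_locales
  show ?thesis by (rule nonext)
qed

lemma QQ:
  assumes "wfc U C" "C \<noteq> {}" "card C \<le> 4" "ACov U C"
  shows "\<not> s_extremal (FF U C)"
  using assms
proof (induction "card U" arbitrary: U C rule: less_induct)
  case less
  have finU: "finite U" using less.prems unfolding wfc_def by simp
  have FFsub: "FF U C \<subseteq> Pow U" unfolding FF_def by auto
  show ?case
  proof (cases "\<exists>c\<in>U. \<not> critical C c")
    case True
    then obtain c where c: "c \<in> U" "\<not> critical C c" by blast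
    let ?C' = "(\<lambda>p. (fst p - {c}, snd p - {c})) ` C"
    note pr = proj_red[OF less.prems(1) c less.prems(4)]
    have lt: "card (U - {c}) < card U" using c(1) finU by (meson card_Diff1_less)
    have "\<not> s_extremal (FF (U - {c}) ?C')"
      using less.hyps[OF lt pr(1) _ _ pr(3)] pr(2) less.prems(2,3) by auto
    then show ?thesis using pr(4) ext_red[OF finU FFsub] unfolding s_extremal_def by auto
  next
    case False
    then have crit: "\<forall>c\<in>U. critical C c" by blast
    show ?thesis
    proof (cases "\<exists>c\<in>U. \<not> conflict C c")
      case True
      then obtain c where c: "c \<in> U" "\<not> conflict C c" by blast
      have ex: "\<exists>q\<in>C. c \<notin> fst q" using crit c(1) unfolding critical_def by blast
      let ?C' = "{p \<in> C. c \<notin> fst p}"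
      note fr = face_red[OF less.prems(1) c ex less.prems(4)]
      have lt: "card (U - {c}) < card U" using c(1) finU by (meson card_Diff1_less)
      have "\<not> s_extremal (FF (U - {c}) ?C')"
        using less.hyps[OF lt fr(1) fr(2) _ fr(4)] fr(3) less.prems(3) by auto
      then show ?thesis using fr(5) ext_faces[OF finU FFsub] unfolding s_extremal_def
        by (auto split: if_splits)
    next
      case False
      then show ?thesis using base_final[OF less.prems] crit by blast
    qed
  qed
qed


theorem theorem10:
  fixes n :: nat and S :: "nat set set" and h :: "nat set \<Rightarrow> nat set"
  assumes "S \<subseteq> Pow {1..n}"
    and "S \<noteq> {}"
    and "sperner S"
    and "card S \<le> 4"
    and "\<forall>T\<in>S. h T \<subseteq> T"
    and "s_extremal (Ffam n S h)"
  shows "\<exists>F. F \<subseteq> {1..n} \<and> F \<notin> Ffam n S h \<and> s_extremal (Ffam n S h \<union> {F})"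
proof -
  let ?U = "{1..n}" and ?C = "(\<lambda>T. (T, h T)) ` S"
  have finU: "finite ?U" by simp
  have wf: "wfc ?U ?C" unfolding wfc_def using assms(1,3,5) unfolding sperner_def by auto
  have finS: "finite S" using assms(1) by (meson finite_Pow_iff finite_atLeastAtMost finite_subset)
  have cardC: "card ?C \<le> 4" using card_image_le[OF finS, of "\<lambda>T. (T, h T)"] assms(4) by linarith
  have Qeq: "\<And>T. T \<in> S \<Longrightarrow> Qcube n T (h T) = cube ?U T (h T)"
  proof -
    fix T assume T: "T \<in> S"
    then have hT: "h T \<subseteq> T" "T \<subseteq> ?U" using assms(1,5) by auto
    show "Qcube n T (h T) = cube ?U T (h T)"
    proof (intro set_eqI iffI)
      fix X assume "X \<in> Qcube n T (h T)"
      then obtain B where "X = h T \<union> B" "B \<subseteq> ?U - T" unfolding Qcube_def by auto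
      then show "X \<in> cube ?U T (h T)" unfolding cube_def using hT by auto
    next
      fix X assume "X \<in> cube ?U T (h T)"
      then have X: "X \<subseteq> ?U" "X \<inter> T = h T" unfolding cube_def by auto
      then have "X = h T \<union> (X - T)" "X - T \<subseteq> ?U - T" by auto
      then show "X \<in> Qcube n T (h T)" unfolding Qcube_def by blast
    qed
  qed
  have FFeq: "Ffam n S h = FF ?U ?C"
    unfolding Ffam_def FF_def GG_def using Qeq by auto
  have "\<not> ACov ?U ?C" using QQ[OF wf _ cardC] assms(2,6) FFeq by auto
  then obtain p X where p: "p \<in> ?C" and X: "X \<in> cube ?U (fst p) (snd p)"
    and iso: "\<And>a. a \<in> fst p \<Longrightarrow> flip X a \<notin> GG ?U ?C"
    unfolding ACov_def by blast
  let ?F = "FF ?U ?C"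
  have Fsub: "?F \<subseteq> Pow ?U" unfolding FF_def by auto
  have pU: "fst p \<subseteq> ?U" using wf p unfolding wfc_def by blast
  have XU: "X \<subseteq> ?U" and XS: "X \<inter> fst p = snd p" using X unfolding cube_def by auto
  have XG: "X \<in> GG ?U ?C" using X p unfolding GG_def by blast
  then have XF: "X \<notin> ?F" unfolding FF_def by auto
  have ext: "s_extremal ?F" using assms(6) FFeq by simp
  have key: "T = fst p" if T1: "T \<in> Sh (insert X ?F)" and T2: "T \<notin> Sh ?F" for T
  proof -
    have sh1: "shatters (insert X ?F) T" using T1 unfolding Sh_def by simp
    have notr: "\<not> (\<exists>Z\<in>?F. Z \<inter> T = X \<inter> T)"
    proof
      assume "\<exists>Z\<in>?F. Z \<inter> T = X \<inter> T"
      then have "(\<lambda>A. A \<inter> T) ` insert X ?F = (\<lambda>A. A \<inter> T) ` ?F" by auto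
      then have "shatters ?F T" using sh1 unfolding shatters_def by simp
      then show False using T2 unfolding Sh_def by simp
    qed
    have ST: "fst p \<subseteq> T"
    proof
      fix a assume a: "a \<in> fst p"
      show "a \<in> T"
      proof (rule ccontr)
        assume "a \<notin> T"
        have "flip X a \<subseteq> ?U" using flip_sub[OF XU, of a] a pU by blast
        then have "flip X a \<in> ?F" using iso[OF a] unfolding FF_def by auto
        moreover have "flip X a \<inter> T = X \<inter> T" using \<open>a \<notin> T\<close> unfolding flip_def by auto
        ultimately show False using notr by blast
      qed
    qed
    have TS: "T \<subseteq> fst p"
    proof
      fix a assume a: "a \<in> T"
      show "a \<in> fst p"
      proof (rule ccontr)
        assume an: "a \<notin> fst p"
        have fs: "flip (X \<inter> T) a \<subseteq> T" using a unfolding flip_def by auto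
        obtain Z where Z: "Z \<in> insert X ?F" "Z \<inter> T = flip (X \<inter> T) a"
          using shattersD[OF sh1 fs] by blast
        have "Z \<noteq> X"
        proof
          assume "Z = X"
          then have e: "X \<inter> T = flip (X \<inter> T) a" using Z(2) by simp
          have "a \<in> flip (X \<inter> T) a \<longleftrightarrow> a \<notin> X \<inter> T" by (simp add: flip_mem)
          then show False by (metis e)
        qed
        then have ZF: "Z \<in> ?F" using Z by auto
        have "Z \<inter> fst p = X \<inter> fst p"
        proof (intro set_eqI)
          fix b
          show "b \<in> Z \<inter> fst p \<longleftrightarrow> b \<in> X \<inter> fst p"
          proof (cases "b \<in> fst p")
            case True
            then have "b \<in> T" "b \<noteq> a" using ST an by auto
            then have "b \<in> Z \<longleftrightarrow> b \<in> flip (X \<inter> T) a" using Z(2) by blast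
            then show ?thesis using True \<open>b \<noteq> a\<close> \<open>b \<in> T\<close> unfolding flip_def by auto
          qed simp
        qed
        then have "Z \<in> cube ?U (fst p) (snd p)" using ZF XS unfolding cube_def FF_def by auto
        then have "Z \<in> GG ?U ?C" using p unfolding GG_def by blast
        then show False using ZF unfolding FF_def by auto
      qed
    qed
    show ?thesis using ST TS by auto
  qed
  have "s_extremal (insert X ?F)"
    unfolding s_extremal_def
    using add_point[OF finU Fsub ext[unfolded s_extremal_def] XU XF key] by simp
  then show ?thesis using XU XF FFeq by (intro exI[of _ X]) auto
qed

end
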